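(* Let $m$ be a positive measurable function on $\mathbb R$ with $\int_{\mathbb R}\frac{m(u)}{1+u^2}du<\infty$. Assume there exist constants $b<2$ and $K,C_1,C_2>0$ such that \[ m(u)\le K|u|^{-b}\ \text{ for } |u|\le1,\qquad m(u)\le C_1e^{C_2|u|}\ \text{ for } |u|\ge1. \] Then there exists a function $t\mapsto W_m(t)$ from $\mathbb R$ into the space $\mathcal L(\widetilde{\mathcal G}_1,\widetilde{\mathcal G}_{-1})$ of continuous linear operators such that, for every $f\in\widetilde{\mathcal G}_1$, \[ \frac{d}{dt}X_m(t)f=W_m(t)f \] in the topology of $\widetilde{\mathcal G}_{-1}$.
   Context: Let $(\widetilde h_n)_{n\ge1}$ be the normalized Hermite functions, an orthonormal basis of $\mathbf L_2(\mathbb R)$. For $p\in\mathbb Z$, define \[ \mathcal K_p=\Big\{\sum_nf_n\widetilde h_n:\sum_n|f_n|^22^{np}<\infty\Big\}, \] with the corresponding Hilbert norm. $\Gamma(\mathcal K_p)$ is its full Fock space, $\widetilde{\mathcal G}_1=\bigcap_{p\in\mathbb N}\Gamma(\mathcal K_p)$ (projective limit) and $\widetilde{\mathcal G}_{-1}=\bigcup_{p\in\mathbb N}\Gamma(\mathcal K_{-p})$ (inductive limit). For $g=\sum g_k\widetilde h_k\in\bigcup_p\mathcal K_p$: $\ell_gu=g\otimes u$ is the creation operator. The annihilation operator is $\ell_g^*\Omega=0$, $\ell_g^*(u_1\otimes\cdots\otimes u_n)=(\sum_k\overline{g_k}u_{1,k})u_2\otimes\cdots\otimes u_n$. The Fourier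 transform is $\widehat f(u)=\int e^{-iux}f(x)dx$, and $T_m$ is the Fourier multiplier $\widehat{T_mf}=\sqrt m\widehat f$. For $t<0$, $1_{[0,t]}:=-1_{[t,0]}$. Finally, $X_m(t)=\ell_{T_m1_{[0,t]}}+\ell^*_{T_m1_{[0,t]}}$. *)

theory Defs
  imports "HOL-Analysis.Analysis"
begin

fun hermite_poly :: "nat \<Rightarrow> real \<Rightarrow> real" where
  "hermite_poly 0 x = 1"
| "hermite_poly (Suc 0) x = 2 * x"
| "hermite_poly (Suc (Suc n)) x =
     2 * x * hermite_poly (Suc n) x - 2 * real (Suc n) * hermite_poly n x"

text \<open>Orthonormal Hermite functions in L2(R).  Index k (from 0) stands for the
  paper's normalized Hermite function with index k+1.\<close>
definition hermite_fun :: "nat \<Rightarrow> real \<Rightarrow> real" where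
  "hermite_fun k x = hermite_poly k x * exp (- (x^2) / 2)
                      / sqrt (2 ^ k * fact k * sqrt pi)"

definition fourier :: "(real \<Rightarrow> real) \<Rightarrow> real \<Rightarrow> complex" where
  "fourier f u = (LINT x|lborel. cis (- (u * x)) * complex_of_real (f x))"

definition ind0 :: "real \<Rightarrow> real \<Rightarrow> real" where
  "ind0 t x = (if 0 \<le> t then indicator {0..t} x else - indicator {t..0} x)"

text \<open>Hermite coefficients of T_m f, i.e. <T_m f, h_k>, computed by Parseval from
  the defining relation  (T_m f)^ = sqrt m * f^.\<close>
definition Tm_coeff :: "(real \<Rightarrow> real) \<Rightarrow> (real \<Rightarrow> real) \<Rightarrow> nat \<Rightarrow> complex" where
  "Tm_coeff m f k = (1 / (2 * pi)) *
     (LINT u|lborel. complex_of_real (sqrt (m u)) * fourier f u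
                       * cnj (fourier (hermite_fun k) u))"

text \<open>A vector of the full Fock space is given by its coefficients with respect to
  the orthogonal basis  h_{k1} \<otimes> ... \<otimes> h_{kn}  (the empty list is the vacuum).\<close>
type_synonym fock = "nat list \<Rightarrow> complex"

definition fock_weight :: "int \<Rightarrow> nat list \<Rightarrow> real" where
  "fock_weight p ks = (2::real) powr (real_of_int p * real (sum_list (map Suc ks)))"

definition fock_in :: "int \<Rightarrow> fock \<Rightarrow> bool" where
  "fock_in p F \<longleftrightarrow> (\<lambda>ks. (cmod (F ks))^2 * fock_weight p ks) summable_on UNIV"

definition fock_norm :: "int \<Rightarrow> fock \<Rightarrow> real" where
  "fock_norm p F = sqrt (\<Sum>\<^sub>\<infinity>ks. (cmod (F ks))^2 * fock_weight p ks)"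

definition G1 :: "fock set" where
  "G1 = {F. \<forall>p::nat. fock_in (int p) F}"

definition Gm1 :: "fock set" where
  "Gm1 = {F. \<exists>p::nat. fock_in (- int p) F}"

text \<open>Continuous seminorms of the (locally convex) inductive limit topology on Gm1:
  seminorms whose restriction to every step Gamma(K_{-p}) is continuous.\<close>
definition Gm1_seminorm :: "(fock \<Rightarrow> real) \<Rightarrow> bool" where
  "Gm1_seminorm q \<longleftrightarrow>
     (\<forall>x\<in>Gm1. 0 \<le> q x) \<and>
     (\<forall>x\<in>Gm1. \<forall>y\<in>Gm1. q (\<lambda>ks. x ks + y ks) \<le> q x + q y) \<and>
     (\<forall>x\<in>Gm1. \<forall>c. q (\<lambda>ks. c * x ks) = cmod c * q x) \<and>
     (\<forall>p::nat. \<exists>C. \<forall>x. fock_in (- int p) x \<longrightarrow> q x \<le> C * fock_norm (- int p) x)"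

definition Gm1_tendsto :: "('a \<Rightarrow> fock) \<Rightarrow> fock \<Rightarrow> 'a filter \<Rightarrow> bool" where
  "Gm1_tendsto D L F \<longleftrightarrow> L \<in> Gm1 \<and> eventually (\<lambda>h. D h \<in> Gm1) F \<and>
     (\<forall>q. Gm1_seminorm q \<longrightarrow> ((\<lambda>h. q (\<lambda>ks. D h ks - L ks)) \<longlongrightarrow> 0) F)"

definition cont_lin_G :: "(fock \<Rightarrow> fock) \<Rightarrow> bool" where
  "cont_lin_G T \<longleftrightarrow>
     (\<forall>F\<in>G1. T F \<in> Gm1) \<and>
     (\<forall>F\<in>G1. \<forall>H\<in>G1. T (\<lambda>ks. F ks + H ks) = (\<lambda>ks. T F ks + T H ks)) \<and>
     (\<forall>F\<in>G1. \<forall>c. T (\<lambda>ks. c * F ks) = (\<lambda>ks. c * T F ks)) \<and>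
     (\<forall>q. Gm1_seminorm q \<longrightarrow>
        (\<exists>p::nat. \<exists>C. \<forall>F\<in>G1. q (T F) \<le> C * fock_norm (int p) F))"

definition creation :: "(nat \<Rightarrow> complex) \<Rightarrow> fock \<Rightarrow> fock" where
  "creation g F = (\<lambda>ks. case ks of [] \<Rightarrow> 0 | k # ks' \<Rightarrow> g k * F ks')"

definition annihilation :: "(nat \<Rightarrow> complex) \<Rightarrow> fock \<Rightarrow> fock" where
  "annihilation g F = (\<lambda>ks. \<Sum>k. cnj (g k) * F (k # ks))"

definition Xm :: "(real \<Rightarrow> real) \<Rightarrow> real \<Rightarrow> fock \<Rightarrow> fock" where
  "Xm m t F = (\<lambda>ks. creation (Tm_coeff m (ind0 t)) F ks + annihilation (Tm_coeff m (ind0 t)) F ks)"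

end

theory Submission
  imports Defs "HOL-Probability.Probability" "HOL-Real_Asymp.Real_Asymp"
begin

lemma ibp_zero:
  fixes F f :: "real \<Rightarrow> 'a::euclidean_space"
  assumes F: "\<And>x. (F has_vector_derivative f x) (at x)"
    and c: "\<And>x. isCont f x"
    and i: "integrable lborel f"
    and t: "(F \<longlongrightarrow> 0) at_top" and b: "(F \<longlongrightarrow> 0) at_bot"
  shows "integral\<^sup>L lborel f = 0"
proof -
  have "(LBINT x=-\<infinity>..\<infinity>. f x) = 0 - 0"
    apply (rule interval_integral_FTC_integrable[where F=F])
    using F c i t b by (auto simp: ereal_tendsto_simps set_integrable_def)
  thus ?thesis by (simp add: interval_lebesgue_integral_def set_lebesgue_integral_def)
qed

lemma hp_rec: "hermite_poly (Suc n) x = 2*x*hermite_poly n x - 2*real n*hermite_poly (n-1) x"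
  by (cases n) auto

lemma hp_deriv: "(hermite_poly n has_real_derivative 2*real n*hermite_poly (n-1) x) (at x)"
proof (induction n x rule: hermite_poly.induct)
  case (1 x) then show ?case by (simp add: fun_eq_iff[symmetric])
next
  case (2 x)
  have "((\<lambda>x. 2 * x) has_real_derivative 2) (at x)" by (auto intro!: derivative_eq_intros)
  then show ?case by (simp add: fun_eq_iff)
next
  case (3 n x)
  have e: "hermite_poly (Suc (Suc n)) = (\<lambda>x. 2 * x * hermite_poly (Suc n) x - 2 * real (Suc n) * hermite_poly n x)"
    by (rule ext) simp
  have "((\<lambda>x. 2 * x * hermite_poly (Suc n) x - 2 * real (Suc n) * hermite_poly n x) has_real_derivative
     2 * hermite_poly (Suc n) x + 2*x*(2 * real (Suc n) * hermite_poly n x) - 2 * real (Suc n) * (2 * real n * hermite_poly (n - 1) x)) (at x)"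
    using 3(1) 3(2) by (auto intro!: derivative_eq_intros)
  moreover have "2 * hermite_poly (Suc n) x + 2*x*(2 * real (Suc n) * hermite_poly n x) - 2 * real (Suc n) * (2 * real n * hermite_poly (n - 1) x)
     = 2 * real (Suc (Suc n)) * hermite_poly (Suc (Suc n) - 1) x"
    by (simp only: diff_Suc_1 hp_rec[of n x]) (simp add: algebra_simps)
  ultimately show ?case unfolding e by simp
qed

lemma hp_cont: "continuous_on UNIV (hermite_poly n)"
  using hp_deriv by (meson DERIV_isCont continuous_at_imp_continuous_on)

lemma hp_bound: "\<bar>hermite_poly n x\<bar> \<le> (2 + 2*\<bar>x\<bar> + 2*real n)^n"
proof (induction n x rule: hermite_poly.induct)
  case (1 x) then show ?case by simp
next
  case (2 x) then show ?case by simp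
next
  case (3 n x)
  define M where "M = 2 + 2*\<bar>x\<bar> + 2*real (Suc n)"
  define M' where "M' = 2 + 2*\<bar>x\<bar> + 2*real (Suc (Suc n))"
  have M1: "M \<ge> 1" unfolding M_def by simp
  have a: "\<bar>hermite_poly (Suc n) x\<bar> \<le> M^(Suc n)" using 3(1) unfolding M_def .
  have "(2 + 2*\<bar>x\<bar> + 2*real n)^n \<le> M^n" unfolding M_def by (intro power_mono) auto
  with 3(2) have b: "\<bar>hermite_poly n x\<bar> \<le> M^n" by linarith
  have "\<bar>hermite_poly (Suc (Suc n)) x\<bar> \<le> 2*\<bar>x\<bar>*\<bar>hermite_poly (Suc n) x\<bar> + 2*real (Suc n)*\<bar>hermite_poly n x\<bar>"
    using abs_triangle_ineq4[of "2*x*hermite_poly (Suc n) x" "2*real (Suc n)*hermite_poly n x"]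
    by (simp add: abs_mult)
  also have "\<dots> \<le> 2*\<bar>x\<bar>*M^(Suc n) + 2*real (Suc n)*M^n"
    by (intro add_mono mult_left_mono a b) auto
  also have "\<dots> \<le> 2*\<bar>x\<bar>*M^(Suc n) + M*M^n"
    by (intro add_mono mult_right_mono) (auto simp: M_def)
  also have "\<dots> = (2*\<bar>x\<bar> + 1) * M^(Suc n)" by (simp add: algebra_simps)
  also have "\<dots> \<le> M * M^(Suc n)" by (intro mult_right_mono) (auto simp: M_def)
  also have "\<dots> = M^(Suc (Suc n))" by simp
  also have "\<dots> \<le> M'^(Suc (Suc n))" by (intro power_mono) (auto simp: M_def M'_def)
  finally show ?case unfolding M'_def .
qed

lemma sq_aux: "0 \<le> a \<Longrightarrow> sqrt a * (sqrt a * c) = a * c" "0 \<le> a \<Longrightarrow> sqrt a * sqrt a = a"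
  by (simp_all add: mult.assoc[symmetric])

definition hs :: "nat \<Rightarrow> real" where "hs k = sqrt (2 ^ k * fact k * sqrt pi)"

lemma hs_pos: "hs k > 0" unfolding hs_def by simp

lemma hs_Suc: "hs (Suc k) = sqrt (2 * real (Suc k)) * hs k"
  unfolding hs_def by (simp add: real_sqrt_mult[symmetric] algebra_simps)

lemma hf_def': "hermite_fun k x = hermite_poly k x * exp (- (x^2) / 2) / hs k"
  unfolding hermite_fun_def hs_def by simp

lemma hp_SS: "hermite_poly (Suc (Suc j)) x = 2 * x * hermite_poly (Suc j) x - (2 + 2*real j) * hermite_poly j x"
  by (simp add: algebra_simps)

lemma hf_alg: fixes aa bb ss Ha Hb ee x :: real
  shows "aa > 0 \<Longrightarrow> bb > 0 \<Longrightarrow> ss > 0 \<Longrightarrow>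
  x * (Hb * ee / (aa * ss)) = (aa * (Ha * ee / ss) + bb * ((2 * x * Hb - aa * aa * Ha) * ee / (bb * (aa * ss)))) / 2"
  by (simp add: field_simps)
lemma hf_alg2: fixes aa bb ss Ha Hb ee x :: real
  shows "aa > 0 \<Longrightarrow> bb > 0 \<Longrightarrow> ss > 0 \<Longrightarrow> 
  ((aa * aa * Ha) * ee + Hb * (ee * (-x))) / (aa * ss) = (aa * (Ha * ee / ss) - bb * ((2 * x * Hb - aa * aa * Ha) * ee / (bb * (aa * ss)))) / 2"
  by (simp add: field_simps)

lemma hf_x: "x * hermite_fun k x =
   (sqrt (2 * real k) * hermite_fun (k-1) x + sqrt (2 * real (Suc k)) * hermite_fun (Suc k) x) / 2"
proof (cases k)
  case 0
  then show ?thesis by (simp add: hf_def' hs_Suc field_simps)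
next
  case (Suc j)
  show ?thesis unfolding Suc hf_def' hs_Suc diff_Suc_1
    using hf_alg[where aa="sqrt (2*real (Suc j))" and bb="sqrt (2*real (Suc (Suc j)))" and ss="hs j"
       and Ha="hermite_poly j x" and Hb="hermite_poly (Suc j) x" and ee="exp (- (x^2) / 2)" and x=x] hs_pos[of j]
    by (simp add: hp_SS del: hermite_poly.simps)
qed

lemma hf_deriv: "(hermite_fun k has_real_derivative
   (sqrt (2 * real k) * hermite_fun (k-1) x - sqrt (2 * real (Suc k)) * hermite_fun (Suc k) x) / 2) (at x)"
proof -
  have e: "hermite_fun k = (\<lambda>x. hermite_poly k x * exp (- (x^2) / 2) / hs k)"
    by (rule ext) (simp add: hf_def')
  have d: "(hermite_fun k has_real_derivative
     ((2*real k*hermite_poly (k-1) x) * exp (- (x^2) / 2) + hermite_poly k x * (exp (- (x^2) / 2) * (-x))) / hs k) (at x)"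
    unfolding e using hp_deriv[of k x] hs_pos[of k] by (auto intro!: derivative_eq_intros)
  have eq: "((2*real k*hermite_poly (k-1) x) * exp (- (x^2) / 2) + hermite_poly k x * (exp (- (x^2) / 2) * (-x))) / hs k
     = (sqrt (2 * real k) * hermite_fun (k-1) x - sqrt (2 * real (Suc k)) * hermite_fun (Suc k) x) / 2"
  proof (cases k)
    case 0
    then show ?thesis by (simp add: hf_def' hs_Suc field_simps)
  next
    case (Suc j)
    show ?thesis unfolding Suc hf_def' hs_Suc diff_Suc_1
      using hf_alg2[where aa="sqrt (2*real (Suc j))" and bb="sqrt (2*real (Suc (Suc j)))" and ss="hs j"
       and Ha="hermite_poly j x" and Hb="hermite_poly (Suc j) x" and ee="exp (- (x^2) / 2)" and x=x] hs_pos[of j]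
      by (simp add: hp_SS del: hermite_poly.simps)
  qed
  show ?thesis using d unfolding eq by assumption
qed

lemma onepow_le: "(1 + a)^n \<le> 2^n * (1 + a^n)" if "a \<ge> 0" for a :: real
proof -
  have "(1 + a)^n \<le> (2 * max 1 a)^n" using that by (intro power_mono) auto
  also have "\<dots> = 2^n * (max 1 a)^n" by (simp add: power_mult_distrib)
  also have "(max 1 a)^n \<le> 1 + a^n" using that by (cases "a \<le> 1") (auto simp: max_def)
  finally show ?thesis by simp
qed

lemma gmaj_integrable: "integrable lborel (\<lambda>x::real. (1+\<bar>x\<bar>)^n * exp (-(x^2)/2))"
proof (rule Bochner_Integration.integrable_bound)
  show "integrable lborel (\<lambda>x. (2^n * sqrt (2*pi)) * (std_normal_density x * \<bar>x\<bar>^0 + std_normal_density x * \<bar>x\<bar>^n))"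
    using integrable_std_normal_moment_abs[of 0] integrable_std_normal_moment_abs[of n] by auto
  show "(\<lambda>x::real. (1+\<bar>x\<bar>)^n * exp (-(x^2)/2)) \<in> borel_measurable lborel" by measurable
  show "AE x in lborel. norm ((1+\<bar>x\<bar>)^n * exp (-(x^2)/2)) \<le> norm ((2^n * sqrt (2*pi)) * (std_normal_density x * \<bar>x\<bar>^0 + std_normal_density x * \<bar>x\<bar>^n))"
  proof (intro AE_I2)
    fix x :: real
    have "(1+\<bar>x\<bar>)^n * exp (-(x^2)/2) \<le> 2^n * (1 + \<bar>x\<bar>^n) * exp (-(x^2)/2)"
      by (intro mult_right_mono onepow_le) auto
    also have "\<dots> = (2^n * sqrt (2*pi)) * (std_normal_density x * \<bar>x\<bar>^0 + std_normal_density x * \<bar>x\<bar>^n)"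
      by (simp add: std_normal_density_def field_simps)
    finally show "norm ((1+\<bar>x\<bar>)^n * exp (-(x^2)/2)) \<le> norm ((2^n * sqrt (2*pi)) * (std_normal_density x * \<bar>x\<bar>^0 + std_normal_density x * \<bar>x\<bar>^n))"
      by (simp add: normal_density_nonneg)
  qed
qed

definition gdom :: "(real \<Rightarrow> 'a::real_normed_vector) \<Rightarrow> bool" where
  "gdom f \<longleftrightarrow> continuous_on UNIV f \<and> (\<exists>C n. \<forall>x. norm (f x) \<le> C * (1+\<bar>x\<bar>)^n * exp (-(x^2)/2))"

lemma gdom_integrable:
  fixes f :: "real \<Rightarrow> 'a::{banach, second_countable_topology}"
  assumes "gdom f" shows "integrable lborel f"
proof -
  obtain C n where b: "\<And>x. norm (f x) \<le> C * (1+\<bar>x\<bar>)^n * exp (-(x^2)/2)" and c: "continuous_on UNIV f"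
    using assms unfolding gdom_def by blast
  show ?thesis
  proof (rule Bochner_Integration.integrable_bound)
    show "integrable lborel (\<lambda>x. C * ((1+\<bar>x\<bar>)^n * exp (-(x^2)/2)))" using gmaj_integrable by auto
    show "f \<in> borel_measurable lborel" using borel_measurable_continuous_onI[OF c] by simp
    show "AE x in lborel. norm (f x) \<le> norm (C * ((1+\<bar>x\<bar>)^n * exp (-(x^2)/2)))"
    proof (intro AE_I2)
      fix x
      have "norm (f x) \<le> C * ((1+\<bar>x\<bar>)^n * exp (-(x^2)/2))" using b[of x] by (simp add: mult.assoc)
      also have "\<dots> \<le> norm (C * ((1+\<bar>x\<bar>)^n * exp (-(x^2)/2)))" by (simp only: real_norm_def abs_ge_self)
      finally show "norm (f x) \<le> norm (C * ((1+\<bar>x\<bar>)^n * exp (-(x^2)/2)))" .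
    qed
  qed
qed

lemma gdom_tendsto:
  assumes "gdom f" shows "(f \<longlongrightarrow> 0) at_top" "(f \<longlongrightarrow> 0) at_bot"
proof -
  obtain C n where b: "\<And>x. norm (f x) \<le> C * (1+\<bar>x\<bar>)^n * exp (-(x^2)/2)"
    using assms unfolding gdom_def by blast
  have l1: "((\<lambda>x::real. C * ((1+\<bar>x\<bar>)^n * exp (-(x^2)/2))) \<longlongrightarrow> 0) at_top"
    by (intro tendsto_mult_right_zero) real_asymp
  have l2: "((\<lambda>x::real. C * ((1+\<bar>x\<bar>)^n * exp (-(x^2)/2))) \<longlongrightarrow> 0) at_bot"
    by (intro tendsto_mult_right_zero) real_asymp
  show "(f \<longlongrightarrow> 0) at_top"
    by (rule Lim_null_comparison[OF _ l1]) (use b in \<open>auto simp: mult.assoc\<close>)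
  show "(f \<longlongrightarrow> 0) at_bot"
    by (rule Lim_null_comparison[OF _ l2]) (use b in \<open>auto simp: mult.assoc\<close>)
qed

lemma gdom_C_nonneg:
  assumes "\<And>x. norm (f x) \<le> C * (1+\<bar>x\<bar>)^n * exp (-(x^2)/2)" shows "C \<ge> 0"
proof -
  have "norm (f 0) \<le> C" using assms[of 0] by simp
  thus ?thesis using norm_ge_zero[of "f 0"] by linarith
qed

lemma pow_mono_max: "(1+\<bar>x\<bar>)^n \<le> (1+\<bar>x::real\<bar>)^(max n m)" "(1+\<bar>x\<bar>)^m \<le> (1+\<bar>x::real\<bar>)^(max n m)"
  by (auto intro: power_increasing)

lemma gdom_add: assumes "gdom f" "gdom g" shows "gdom (\<lambda>x. f x + g x)"
proof -
  obtain C n where b: "\<And>x. norm (f x) \<le> C * (1+\<bar>x\<bar>)^n * exp (-(x^2)/2)" and c: "continuous_on UNIV f"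
    using assms unfolding gdom_def by blast
  obtain D m where b2: "\<And>x. norm (g x) \<le> D * (1+\<bar>x\<bar>)^m * exp (-(x^2)/2)" and c2: "continuous_on UNIV g"
    using assms unfolding gdom_def by blast
  have C: "C \<ge> 0" "D \<ge> 0" using gdom_C_nonneg b b2 by blast+
  have "norm (f x + g x) \<le> (C + D) * (1+\<bar>x\<bar>)^(max n m) * exp (-(x^2)/2)" for x
  proof -
    have "norm (f x + g x) \<le> C * (1+\<bar>x\<bar>)^n * exp (-(x^2)/2) + D * (1+\<bar>x\<bar>)^m * exp (-(x^2)/2)"
      using norm_triangle_ineq[of "f x" "g x"] b[of x] b2[of x] by linarith
    also have "\<dots> \<le> C * (1+\<bar>x\<bar>)^(max n m) * exp (-(x^2)/2) + D * (1+\<bar>x\<bar>)^(max n m) * exp (-(x^2)/2)"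
      using C by (intro add_mono mult_right_mono mult_left_mono pow_mono_max) auto
    finally show ?thesis by (simp add: algebra_simps)
  qed
  thus ?thesis unfolding gdom_def using c c2 by (auto intro!: continuous_intros)
qed

lemma gdom_bmult:
  fixes f :: "real \<Rightarrow> 'a::real_normed_algebra"
  assumes "gdom f" "continuous_on UNIV g" "\<And>x. norm (g x) \<le> B * (1+\<bar>x\<bar>)^k"
  shows "gdom (\<lambda>x. g x * f x)"
proof -
  obtain C n where b: "\<And>x. norm (f x) \<le> C * (1+\<bar>x\<bar>)^n * exp (-(x^2)/2)" and c: "continuous_on UNIV f"
    using assms unfolding gdom_def by blast
  have C: "C \<ge> 0" using gdom_C_nonneg b by blast
  have "norm (g x * f x) \<le> (B * C) * (1+\<bar>x\<bar>)^(k+n) * exp (-(x^2)/2)" for x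
  proof -
    have "norm (g x * f x) \<le> norm (g x) * norm (f x)" by (rule norm_mult_ineq)
    also have "\<dots> \<le> (B * (1+\<bar>x\<bar>)^k) * (C * (1+\<bar>x\<bar>)^n * exp (-(x^2)/2))"
      using assms(3)[of x] norm_ge_zero[of "g x"] norm_ge_zero[of "f x"] by (intro mult_mono assms b) linarith+
    finally show ?thesis by (simp add: power_add algebra_simps)
  qed
  thus ?thesis unfolding gdom_def using c assms(2) by (auto intro!: continuous_intros)
qed

lemma gdom_scaleR:
  fixes f :: "real \<Rightarrow> 'a::real_normed_vector"
  assumes "gdom f" "continuous_on UNIV g" "\<And>x. \<bar>g x\<bar> \<le> B * (1+\<bar>x\<bar>)^k"
  shows "gdom (\<lambda>x. g x *\<^sub>R f x)"
proof -
  obtain C n where b: "\<And>x. norm (f x) \<le> C * (1+\<bar>x\<bar>)^n * exp (-(x^2)/2)" and c: "continuous_on UNIV f"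
    using assms unfolding gdom_def by blast
  have C: "C \<ge> 0" using gdom_C_nonneg b by blast
  have "norm (g x *\<^sub>R f x) \<le> (B * C) * (1+\<bar>x\<bar>)^(k+n) * exp (-(x^2)/2)" for x
  proof -
    have "norm (g x *\<^sub>R f x) = \<bar>g x\<bar> * norm (f x)" by simp
    also have "\<dots> \<le> (B * (1+\<bar>x\<bar>)^k) * (C * (1+\<bar>x\<bar>)^n * exp (-(x^2)/2))"
      by (intro mult_mono assms b) (use assms(3)[of x] abs_ge_zero[of "g x"] in auto)
    finally show ?thesis by (simp add: power_add algebra_simps)
  qed
  thus ?thesis unfolding gdom_def using c assms(2) by (auto intro!: continuous_intros)
qed

lemma gdom_hf: "gdom (hermite_fun k)"
proof -
  have "\<bar>hermite_fun k x\<bar> \<le> ((2 + 2*real k)^k / hs k) * (1+\<bar>x\<bar>)^k * exp (-(x^2)/2)" for x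
  proof -
    have "\<bar>hermite_poly k x\<bar> \<le> (2 + 2*\<bar>x\<bar> + 2*real k)^k" by (rule hp_bound)
    also have "\<dots> \<le> ((2 + 2*real k) * (1 + \<bar>x\<bar>))^k"
      by (intro power_mono) (auto simp: algebra_simps)
    finally have "\<bar>hermite_poly k x\<bar> \<le> (2 + 2*real k)^k * (1 + \<bar>x\<bar>)^k" by (simp add: power_mult_distrib)
    then show ?thesis unfolding hf_def' using hs_pos[of k]
      by (simp add: abs_mult divide_simps mult_right_mono)
  qed
  moreover have "continuous_on UNIV (hermite_fun k)"
    unfolding hf_def'[abs_def] using hp_cont[of k] hs_pos[of k] by (auto intro!: continuous_intros)
  ultimately show ?thesis unfolding gdom_def real_norm_def by blast
qed

lemma gdom_of_real: "gdom f \<Longrightarrow> gdom (\<lambda>x. complex_of_real (f x))"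
  unfolding gdom_def by (auto intro!: continuous_intros)

lemma cis_vd: "((\<lambda>x. cis (-(u*x))) has_vector_derivative (- \<i> * complex_of_real u * cis (-(u*x)))) (at x)"
proof -
  have "((\<lambda>z. exp (- \<i> * complex_of_real u * z)) has_field_derivative
           (exp (- \<i> * complex_of_real u * complex_of_real x) * (- \<i> * complex_of_real u))) (at (complex_of_real x))"
    by (auto intro!: derivative_eq_intros)
  from has_vector_derivative_real_field[OF this]
  have "((\<lambda>x. exp (- \<i> * complex_of_real u * complex_of_real x)) has_vector_derivative
           (exp (- \<i> * complex_of_real u * complex_of_real x) * (- \<i> * complex_of_real u))) (at x)" .
  moreover have e1: "(\<lambda>x. exp (- \<i> * complex_of_real u * complex_of_real x)) = (\<lambda>x. cis (-(u*x)))"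
    by (rule ext) (simp add: cis_conv_exp mult.assoc)
  moreover have e2: "exp (- \<i> * complex_of_real u * complex_of_real x) * (- \<i> * complex_of_real u) = - \<i> * complex_of_real u * cis (-(u*x))"
    by (simp add: cis_conv_exp algebra_simps)
  ultimately show ?thesis by (simp only:)
qed

lemma cis_cont: "continuous_on UNIV (\<lambda>x. cis (-(u*x)))"
  using cis_vd by (meson continuous_at_imp_continuous_on has_vector_derivative_continuous)

lemma gdom_cis: "gdom f \<Longrightarrow> gdom (\<lambda>x. cis (-(u*x)) * complex_of_real (f x))"
  by (rule gdom_bmult[where B=1 and k=0]) (auto intro: gdom_of_real cis_cont)

lemma fourier_integrable: "gdom f \<Longrightarrow> integrable lborel (\<lambda>x. cis (-(u*x)) * complex_of_real (f x))"
  by (intro gdom_integrable gdom_cis)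

lemma fourier_gauss: "fourier (\<lambda>x. exp (-(x^2)/2)) u = complex_of_real (sqrt (2*pi) * exp (-(u^2)/2))"
proof -
  have "char std_normal_distribution (-u) = complex_of_real (exp (-((-u)^2)/2))"
    by (simp add: char_std_normal_distribution)
  also have "char std_normal_distribution (-u) = (LINT x|lborel. std_normal_density x *\<^sub>R iexp ((-u) * x))"
    unfolding char_def by (rule integral_density) (auto simp: normal_density_nonneg)
  also have "\<dots> = (LINT x|lborel. complex_of_real (1 / sqrt (2*pi)) * (cis (-(u*x)) * complex_of_real (exp (-(x^2)/2))))"
    by (rule Bochner_Integration.integral_cong) (auto simp: std_normal_density_def scaleR_conv_of_real cis_conv_exp)
  also have "\<dots> = complex_of_real (1 / sqrt (2*pi)) * fourier (\<lambda>x. exp (-(x^2)/2)) u"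
    unfolding fourier_def by simp
  finally have "complex_of_real (1 / sqrt (2*pi)) * fourier (\<lambda>x. exp (-(x^2)/2)) u = complex_of_real (exp (-(u^2)/2))"
    by simp
  then show ?thesis
    by (simp add: field_simps)
qed

lemma fourier_deriv:
  assumes d: "\<And>x. (f has_real_derivative f' x) (at x)" and g: "gdom f" "gdom f'"
  shows "fourier f' u = \<i> * complex_of_real u * fourier f u"
proof -
  let ?F = "\<lambda>x. cis (-(u*x)) * complex_of_real (f x)"
  let ?A = "\<lambda>x. cis (-(u*x)) * complex_of_real (f' x)"
  let ?B = "\<lambda>x. (- \<i> * complex_of_real u) * (cis (-(u*x)) * complex_of_real (f x))"
  have iA: "integrable lborel ?A" using fourier_integrable[OF g(2)] .
  have iB: "integrable lborel ?B" using fourier_integrable[OF g(1)] by simp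
  have gAB: "gdom (\<lambda>x. ?A x + ?B x)"
    by (intro gdom_add gdom_cis g) (rule gdom_bmult[where B="\<bar>u\<bar>" and k=0], auto intro: gdom_cis g continuous_intros simp: norm_mult)
  have "integral\<^sup>L lborel (\<lambda>x. ?A x + ?B x) = 0"
  proof (rule ibp_zero[where F="?F"])
    fix x
    have h: "(?F has_vector_derivative (cis (-(u*x)) * complex_of_real (f' x) + (- \<i> * complex_of_real u * cis (-(u*x))) * complex_of_real (f x))) (at x)"
      by (rule has_vector_derivative_mult[OF cis_vd has_vector_derivative_of_real[OF d]])
    have eq: "cis (-(u*x)) * complex_of_real (f' x) + (- \<i> * complex_of_real u * cis (-(u*x))) * complex_of_real (f x) = ?A x + ?B x"
      by (simp add: algebra_simps)
    show "(?F has_vector_derivative ?A x + ?B x) (at x)"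
      unfolding eq[symmetric] by (rule h)
    show "isCont (\<lambda>x. ?A x + ?B x) x" using gAB unfolding gdom_def
      by (simp add: continuous_on_eq_continuous_at)
  next
    show "integrable lborel (\<lambda>x. ?A x + ?B x)" using iA iB by simp
    show "(?F \<longlongrightarrow> 0) at_top" "(?F \<longlongrightarrow> 0) at_bot" using gdom_tendsto gdom_cis[OF g(1)] by blast+
  qed
  hence "integral\<^sup>L lborel ?A + integral\<^sup>L lborel ?B = 0" using iA iB by simp
  moreover have "integral\<^sup>L lborel ?B = (- \<i> * complex_of_real u) * fourier f u" unfolding fourier_def by simp
  ultimately show ?thesis unfolding fourier_def by (simp add: algebra_simps add_eq_0_iff)
qed

lemma gdom_cmul: "gdom f \<Longrightarrow> gdom (\<lambda>x. c * f x :: real)"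
  using gdom_scaleR[where g="\<lambda>_. c" and B="\<bar>c\<bar>" and k=0 and f=f] by (simp add: continuous_intros)

lemma fourier_lin:
  assumes "gdom f" "gdom g"
  shows "fourier (\<lambda>x. a * f x + b * g x) u = complex_of_real a * fourier f u + complex_of_real b * fourier g u"
proof -
  have "fourier (\<lambda>x. a * f x + b * g x) u =
    (LINT x|lborel. complex_of_real a * (cis (-(u*x)) * complex_of_real (f x)) + complex_of_real b * (cis (-(u*x)) * complex_of_real (g x)))"
    unfolding fourier_def by (rule Bochner_Integration.integral_cong) (auto simp: algebra_simps)
  also have "\<dots> = complex_of_real a * fourier f u + complex_of_real b * fourier g u"
    unfolding fourier_def using fourier_integrable[OF assms(1)] fourier_integrable[OF assms(2)]
    by (subst Bochner_Integration.integral_add) auto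
  finally show ?thesis .
qed

definition hdv :: "nat \<Rightarrow> real \<Rightarrow> real" where
  "hdv k x = sqrt (2 * real k) / 2 * hermite_fun (k-1) x + (- sqrt (2 * real (Suc k)) / 2) * hermite_fun (Suc k) x"

lemma hd_deriv: "(hermite_fun k has_real_derivative hdv k x) (at x)"
  using hf_deriv[of k x] unfolding hdv_def by (simp add: diff_divide_distrib)

lemma gdom_hd: "gdom (hdv k)"
  unfolding hdv_def[abs_def] by (intro gdom_add gdom_cmul gdom_hf)

abbreviation "hF k u \<equiv> fourier (hermite_fun k) u"

lemma hF_rec: "complex_of_real (sqrt (2 * real (Suc k))) * hF (Suc k) u =
   complex_of_real (sqrt (2 * real k)) * hF (k-1) u - 2 * \<i> * complex_of_real u * hF k u"
proof -
  have "fourier (hdv k) u = \<i> * complex_of_real u * hF k u"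
    by (rule fourier_deriv[OF hd_deriv gdom_hf gdom_hd])
  moreover have "fourier (hdv k) u = complex_of_real (sqrt (2 * real k) / 2) * hF (k-1) u
      + complex_of_real (- sqrt (2 * real (Suc k)) / 2) * hF (Suc k) u"
    unfolding hdv_def by (rule fourier_lin) (rule gdom_hf)+
  ultimately show ?thesis
    by (simp add: field_simps)
qed

lemma gdom_gauss: "gdom (\<lambda>x::real. exp (-(x^2)/2))"
  unfolding gdom_def
proof (intro conjI)
  show "continuous_on UNIV (\<lambda>x::real. exp (-(x^2)/2))" by (intro continuous_intros) auto
  show "\<exists>C n. \<forall>x. norm (exp (-(x^2)/2)) \<le> C * (1+\<bar>x\<bar>)^n * exp (-(x^2)/2)"
    by (rule exI[of _ 1], rule exI[of _ 0]) simp
qed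

lemma hF_0: "hF 0 u = complex_of_real (sqrt (2*pi)) * complex_of_real (hermite_fun 0 u)"
proof -
  have e: "hermite_fun 0 = (\<lambda>x. (1 / hs 0) * exp (-(x^2)/2) + 0 * exp (-(x^2)/2))"
    by (rule ext) (simp add: hf_def')
  have "hF 0 u = complex_of_real (1 / hs 0) * fourier (\<lambda>x. exp (-(x^2)/2)) u + complex_of_real 0 * fourier (\<lambda>x. exp (-(x^2)/2)) u"
    by (simp only: e fourier_lin[OF gdom_gauss gdom_gauss])
  then show ?thesis unfolding fourier_gauss by (simp add: hf_def')
qed

lemma alg3: fixes A s c q hk uu q1 hk1 P :: complex
  assumes "A = s*(c*q*hk) - 2*\<i>*uu*(c*q1*hk1)" "q = -P" "\<i>*q1 = -P"
  shows "A = c*P*(2*uu*hk1 - s*hk)"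
proof -
  have "A = s*(c*q*hk) - 2*uu*c*hk1*(\<i>*q1)" using assms(1) by (simp add: algebra_simps)
  then show ?thesis using assms(2,3) by (simp add: algebra_simps)
qed

theorem hF_eq: "hF k u = complex_of_real (sqrt (2*pi)) * (- \<i>)^k * complex_of_real (hermite_fun k u)"
proof -
  let ?c = "complex_of_real (sqrt (2*pi))"
  have "(\<forall>u. hF k u = ?c * (- \<i>)^k * complex_of_real (hermite_fun k u)) \<and>
        (\<forall>u. hF (Suc k) u = ?c * (- \<i>)^(Suc k) * complex_of_real (hermite_fun (Suc k) u))"
  proof (induction k)
    case 0
    have P0: "\<forall>u. hF 0 u = ?c * (- \<i>)^0 * complex_of_real (hermite_fun 0 u)" using hF_0 by simp
    moreover have "\<forall>u. hF (Suc 0) u = ?c * (- \<i>)^(Suc 0) * complex_of_real (hermite_fun (Suc 0) u)"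
    proof
      fix u
      have r: "complex_of_real (sqrt 2) * hF 1 u = - 2 * \<i> * complex_of_real u * hF 0 u"
        using hF_rec[of 0 u] by simp
      have x: "u * hermite_fun 0 u = sqrt 2 * hermite_fun 1 u / 2" using hf_x[of u 0] by simp
      have "complex_of_real (sqrt 2) * hF 1 u = complex_of_real (sqrt 2) * (?c * (- \<i>) * complex_of_real (hermite_fun 1 u))"
        unfolding r using P0 x
        by (simp add: field_simps) (metis (no_types, opaque_lifting) of_real_mult of_real_numeral mult.assoc mult.commute)
      then have "hF 1 u = ?c * (- \<i>) * complex_of_real (hermite_fun 1 u)"
        by (rule mult_left_cancel[THEN iffD1, rotated]) simp
      then show "hF (Suc 0) u = ?c * (- \<i>)^(Suc 0) * complex_of_real (hermite_fun (Suc 0) u)" by simp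
    qed
    ultimately show ?case by blast
  next
    case (Suc k)
    have "\<forall>u. hF (Suc (Suc k)) u = ?c * (- \<i>)^(Suc (Suc k)) * complex_of_real (hermite_fun (Suc (Suc k)) u)"
    proof
      fix u
      have r: "complex_of_real (sqrt (2 * real (Suc (Suc k)))) * hF (Suc (Suc k)) u =
          complex_of_real (sqrt (2 * real (Suc k))) * hF k u - 2 * \<i> * complex_of_real u * hF (Suc k) u"
        using hF_rec[of "Suc k" u] by simp
      have x: "2 * u * hermite_fun (Suc k) u = sqrt (2 * real (Suc k)) * hermite_fun k u + sqrt (2 * real (Suc (Suc k))) * hermite_fun (Suc (Suc k)) u"
        using hf_x[of u "Suc k"] by simp
      have xc: "2 * complex_of_real u * complex_of_real (hermite_fun (Suc k) u) = complex_of_real (sqrt (2 * real (Suc k))) * complex_of_real (hermite_fun k u) + complex_of_real (sqrt (2 * real (Suc (Suc k)))) * complex_of_real (hermite_fun (Suc (Suc k)) u)"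
        using arg_cong[OF x, of complex_of_real] by simp
      have ii: "(- \<i>) ^ k = - ((- \<i>)^(Suc (Suc k)))" "\<i> * (- \<i>)^(Suc k) = - ((- \<i>)^(Suc (Suc k)))"
        by (simp_all add: power2_eq_square)
      have IHk: "hF k u = ?c * (- \<i>)^k * complex_of_real (hermite_fun k u)"
        and IHk1: "hF (Suc k) u = ?c * (- \<i>)^(Suc k) * complex_of_real (hermite_fun (Suc k) u)"
        using Suc.IH by blast+
      have "complex_of_real (sqrt (2 * real (Suc (Suc k)))) * hF (Suc (Suc k)) u =
          ?c * (- \<i>)^(Suc (Suc k)) * (2 * complex_of_real u * complex_of_real (hermite_fun (Suc k) u)
             - complex_of_real (sqrt (2 * real (Suc k))) * complex_of_real (hermite_fun k u))"
        by (rule alg3[OF _ ii]) (unfold r IHk IHk1, rule refl)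
      also have "\<dots> = complex_of_real (sqrt (2 * real (Suc (Suc k)))) * (?c * (- \<i>)^(Suc (Suc k)) * complex_of_real (hermite_fun (Suc (Suc k)) u))"
        unfolding xc by (simp add: algebra_simps)
      finally show "hF (Suc (Suc k)) u = ?c * (- \<i>)^(Suc (Suc k)) * complex_of_real (hermite_fun (Suc (Suc k)) u)"
        by (rule mult_left_cancel[THEN iffD1, rotated]) simp
    qed
    then show ?case using Suc.IH by blast
  qed
  then show ?thesis by blast
qed

lemma gdom_poly_bound:
  assumes "gdom f" shows "\<exists>C n. \<forall>x. norm (f x) \<le> C * (1+\<bar>x\<bar>)^n"
proof -
  obtain C n where b: "\<And>x. norm (f x) \<le> C * (1+\<bar>x\<bar>)^n * exp (-(x^2)/2)"
    using assms unfolding gdom_def by blast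
  have C: "C \<ge> 0" using gdom_C_nonneg b by blast
  have "norm (f x) \<le> C * (1+\<bar>x\<bar>)^n" for x
  proof -
    have "C * (1+\<bar>x\<bar>)^n * exp (-(x^2)/2) \<le> C * (1+\<bar>x\<bar>)^n * 1"
      using C by (intro mult_left_mono) auto
    thus ?thesis using b[of x] by simp
  qed
  thus ?thesis by blast
qed

lemma gdom_mult:
  fixes f g :: "real \<Rightarrow> 'a::real_normed_algebra"
  assumes "gdom f" "gdom g" shows "gdom (\<lambda>x. f x * g x)"
proof -
  obtain C n where "\<And>x. norm (f x) \<le> C * (1+\<bar>x\<bar>)^n" using gdom_poly_bound[OF assms(1)] by blast
  moreover have "continuous_on UNIV f" using assms(1) unfolding gdom_def by blast
  ultimately show ?thesis by (intro gdom_bmult[OF assms(2)])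
qed

lemma gdom_x: "gdom f \<Longrightarrow> gdom (\<lambda>x. x * f x :: real)"
  using gdom_scaleR[where g="\<lambda>x. x" and B=1 and k=1 and f=f] by (simp add: continuous_intros)

lemma gdom_diff: "gdom f \<Longrightarrow> gdom g \<Longrightarrow> gdom (\<lambda>x. f x - g x :: real)"
  using gdom_add[of f "\<lambda>x. (-1) * g x"] gdom_cmul[of g "-1"] by simp

lemma hf_sq_step: "(LINT x|lborel. (hermite_fun (Suc k) x)^2) = (LINT x|lborel. (hermite_fun k x)^2)"
proof -
  let ?b = "sqrt (2 * real (Suc k))"
  have b0: "?b > 0" by simp
  have x1: "x * hermite_fun k x - hdv k x = ?b * hermite_fun (Suc k) x" for x
    using hf_x[of x k] unfolding hdv_def by (simp add: algebra_simps diff_divide_distrib add_divide_distrib)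
  have x2: "x * hermite_fun (Suc k) x + hdv (Suc k) x = ?b * hermite_fun k x" for x
    using hf_x[of x "Suc k"] unfolding hdv_def by (simp add: algebra_simps diff_divide_distrib add_divide_distrib)
  have pt: "?b * (hermite_fun (Suc k) x)^2 - ?b * (hermite_fun k x)^2
      = - (hdv k x * hermite_fun (Suc k) x + hermite_fun k x * hdv (Suc k) x)" for x
  proof -
    have "?b * (hermite_fun (Suc k) x)^2 = (x * hermite_fun k x - hdv k x) * hermite_fun (Suc k) x"
      unfolding x1 by (simp add: power2_eq_square)
    moreover have "?b * (hermite_fun k x)^2 = hermite_fun k x * (x * hermite_fun (Suc k) x + hdv (Suc k) x)"
      unfolding x2 by (simp add: power2_eq_square)
    ultimately show ?thesis by (simp add: algebra_simps)
  qed
  have g1: "gdom (\<lambda>x. hdv k x * hermite_fun (Suc k) x + hermite_fun k x * hdv (Suc k) x)"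
    by (intro gdom_add gdom_mult gdom_hd gdom_hf)
  have z: "(LINT x|lborel. hdv k x * hermite_fun (Suc k) x + hermite_fun k x * hdv (Suc k) x) = 0"
  proof (rule ibp_zero[where F="\<lambda>x. hermite_fun k x * hermite_fun (Suc k) x"])
    fix x
    show "((\<lambda>x. hermite_fun k x * hermite_fun (Suc k) x) has_vector_derivative hdv k x * hermite_fun (Suc k) x + hermite_fun k x * hdv (Suc k) x) (at x)"
      using DERIV_mult[OF hd_deriv[of k x] hd_deriv[of "Suc k" x]]
      by (simp add: has_real_derivative_iff_has_vector_derivative algebra_simps)
    show "isCont (\<lambda>x. hdv k x * hermite_fun (Suc k) x + hermite_fun k x * hdv (Suc k) x) x"
      using g1 unfolding gdom_def by (simp add: continuous_on_eq_continuous_at)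
  next
    show "integrable lborel (\<lambda>x. hdv k x * hermite_fun (Suc k) x + hermite_fun k x * hdv (Suc k) x)"
      by (rule gdom_integrable[OF g1])
    have "gdom (\<lambda>x. hermite_fun k x * hermite_fun (Suc k) x)" by (intro gdom_mult gdom_hf)
    then show "((\<lambda>x. hermite_fun k x * hermite_fun (Suc k) x) \<longlongrightarrow> 0) at_top"
      "((\<lambda>x. hermite_fun k x * hermite_fun (Suc k) x) \<longlongrightarrow> 0) at_bot"
      using gdom_tendsto by blast+
  qed
  have i1: "integrable lborel (\<lambda>x. (hermite_fun j x)^2)" for j
    using gdom_integrable[OF gdom_mult[OF gdom_hf gdom_hf, of j j]] by (simp add: power2_eq_square)
  have "(LINT x|lborel. ?b * (hermite_fun (Suc k) x)^2 - ?b * (hermite_fun k x)^2) = 0"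
    unfolding pt Bochner_Integration.integral_minus z by simp
  hence "?b * (LINT x|lborel. (hermite_fun (Suc k) x)^2) - ?b * (LINT x|lborel. (hermite_fun k x)^2) = 0"
    using i1 by (simp add: Bochner_Integration.integral_diff)
  thus ?thesis using b0 by (simp add: right_diff_distrib[symmetric])
qed

lemma hf_sq_0: "(LINT x|lborel. (hermite_fun 0 x)^2) = 1"
proof -
  have "has_bochner_integral lborel (\<lambda>x. exp (-x\<^sup>2)*x^(2 * 0)) (sqrt pi * (fact (2 * 0) / (2 ^ (2 * 0) * fact 0)))"
    using has_bochner_integral_even_function[OF gaussian_moment_even_pos[where k=0]] by simp
  hence "(LINT x|lborel. exp (-x\<^sup>2)) = sqrt pi" by (simp add: has_bochner_integral_integral_eq)
  moreover have "(hermite_fun 0 x)^2 = exp (-x\<^sup>2) / sqrt pi" for x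
  proof -
    have "(exp (- x\<^sup>2 / 2))^2 = exp (-x\<^sup>2)" by (simp add: exp_double[symmetric] power2_eq_square[of "exp _"] exp_add[symmetric])
    thus ?thesis by (simp add: hf_def' hs_def power_divide)
  qed
  ultimately show ?thesis by simp
qed

lemma hf_sq: "(LINT x|lborel. (hermite_fun k x)^2) = 1"
  by (induction k) (simp_all add: hf_sq_0 hf_sq_step)

lemma hf_sq_integrable: "integrable lborel (\<lambda>x. (hermite_fun j x)^2)"
  using gdom_integrable[OF gdom_mult[OF gdom_hf gdom_hf, of j j]] by (simp add: power2_eq_square)

lemma hf_x2_integrable: "integrable lborel (\<lambda>x. (1 + x^2) * (hermite_fun j x)^2)"
proof -
  have "gdom (\<lambda>x. hermite_fun j x * hermite_fun j x + x * (x * (hermite_fun j x * hermite_fun j x)))"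
    by (intro gdom_add gdom_x gdom_mult gdom_hf)
  from gdom_integrable[OF this] show ?thesis by (simp add: power2_eq_square algebra_simps)
qed

lemma sq_avg: "((p+q)/2)^2 \<le> (p^2+q^2)/(2::real)"
proof -
  have "0 \<le> (p - q)^2" by simp
  moreover have "(p^2+q^2)/2 - ((p+q)/2)^2 = (p - q)^2 / 4" by (simp add: power2_eq_square field_simps)
  ultimately have "0 \<le> (p^2+q^2)/2 - ((p+q)/2)^2" by linarith
  thus ?thesis by linarith
qed

lemma hf_x2: "(LINT x|lborel. (1 + x^2) * (hermite_fun k x)^2) \<le> 2 * real k + 2"
proof -
  let ?a = "sqrt (2 * real k)" and ?b = "sqrt (2 * real (Suc k))"
  have pt: "(1 + x^2) * (hermite_fun k x)^2 \<le> (hermite_fun k x)^2 + real k * (hermite_fun (k-1) x)^2 + real (Suc k) * (hermite_fun (Suc k) x)^2" for x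
  proof -
    have "(x * hermite_fun k x)^2 = ((?a * hermite_fun (k-1) x + ?b * hermite_fun (Suc k) x) / 2)^2"
      by (simp only: hf_x)
    also have "\<dots> \<le> ((?a * hermite_fun (k-1) x)^2 + (?b * hermite_fun (Suc k) x)^2) / 2"
      by (rule sq_avg)
    also have "\<dots> = real k * (hermite_fun (k-1) x)^2 + real (Suc k) * (hermite_fun (Suc k) x)^2"
      by (simp add: power_mult_distrib)
    finally show ?thesis by (simp add: algebra_simps power_mult_distrib)
  qed
  have "(LINT x|lborel. (1 + x^2) * (hermite_fun k x)^2) \<le>
     (LINT x|lborel. (hermite_fun k x)^2 + real k * (hermite_fun (k-1) x)^2 + real (Suc k) * (hermite_fun (Suc k) x)^2)"
    by (rule integral_mono[OF hf_x2_integrable _ pt]) (intro Bochner_Integration.integrable_add integrable_mult_right hf_sq_integrable)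
  also have "\<dots> = 1 + real k + real (Suc k)"
    using hf_sq_integrable by (simp add: Bochner_Integration.integral_add hf_sq)
  finally show ?thesis by simp
qed

definition FT :: "real \<Rightarrow> real \<Rightarrow> complex" where
  "FT t u = (if u = 0 then complex_of_real t else (1 - cis (-(u*t))) / (\<i> * complex_of_real u))"

lemma fourier_ind0_interval: "fourier (ind0 t) u = (LBINT x=ereal 0..ereal t. cis (-(u*x)))"
proof (cases "0 \<le> t")
  case True
  have "fourier (ind0 t) u = (LBINT x:{0..t}. cis (-(u*x)))"
    unfolding fourier_def set_lebesgue_integral_def ind0_def using True
    by (intro Bochner_Integration.integral_cong) (auto simp: indicator_def)
  then show ?thesis using True by (simp add: interval_integral_Icc)
next
  case False
  have "fourier (ind0 t) u = (LINT x|lborel. - (indicator {t..0} x *\<^sub>R cis (-(u*x))))"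
    unfolding fourier_def ind0_def using False
    by (intro Bochner_Integration.integral_cong) (auto simp: indicator_def)
  also have "\<dots> = - (LBINT x:{t..0}. cis (-(u*x)))"
    unfolding set_lebesgue_integral_def by (rule Bochner_Integration.integral_minus)
  also have "(LBINT x:{t..0}. cis (-(u*x))) = (LBINT x=ereal t..ereal 0. cis (-(u*x)))"
    using False by (simp add: interval_integral_Icc)
  also have "- \<dots> = (LBINT x=ereal 0..ereal t. cis (-(u*x)))"
    by (simp add: interval_integral_endpoints_reverse[of "ereal 0" "ereal t"])
  finally show ?thesis .
qed

lemma fourier_ind0: "fourier (ind0 t) u = FT t u"
proof (cases "u = 0")
  case True
  have "(LBINT x=ereal 0..ereal t. cis (-(u*x))) = complex_of_real t - complex_of_real 0"
    by (rule interval_integral_FTC_finite) (auto simp: True intro!: derivative_eq_intros continuous_intros)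
  then show ?thesis using True by (simp add: fourier_ind0_interval FT_def)
next
  case False
  have "(LBINT x=ereal 0..ereal t. cis (-(u*x))) = cis (-(u*t)) / (- \<i> * complex_of_real u) - cis (-(u*0)) / (- \<i> * complex_of_real u)"
  proof (rule interval_integral_FTC_finite)
    show "continuous_on {min 0 t..max 0 t} (\<lambda>x. cis (-(u*x)))"
      using cis_cont continuous_on_subset by blast
    fix x
    have "((\<lambda>x. cis (-(u*x)) / (- \<i> * complex_of_real u)) has_vector_derivative
        (- \<i> * complex_of_real u * cis (-(u*x))) / (- \<i> * complex_of_real u)) (at x)"
      by (rule has_vector_derivative_divide[OF cis_vd])
    moreover have eq: "(- \<i> * complex_of_real u * cis (-(u*x))) / (- \<i> * complex_of_real u) = cis (-(u*x))"
      using False by simp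
    ultimately show "((\<lambda>x. cis (-(u*x)) / (- \<i> * complex_of_real u)) has_vector_derivative cis (-(u*x)))
        (at x within {min 0 t..max 0 t})"
      by (auto intro: has_vector_derivative_at_within)
  qed
  then show ?thesis using False unfolding fourier_ind0_interval FT_def
    by (simp add: field_simps)
qed

lemma cis_sub_one: "cmod (1 - cis a) \<le> \<bar>a\<bar>"
  using iexp_approx1[of a 0] by (simp add: cis_conv_exp norm_minus_commute)

lemma FT_bound: "cmod (FT t u) \<le> \<bar>t\<bar>"
proof (cases "u = 0")
  case False
  have "cmod (FT t u) = cmod (1 - cis (-(u*t))) / \<bar>u\<bar>"
    using False by (simp add: FT_def norm_divide norm_mult)
  also have "\<dots> \<le> \<bar>u*t\<bar> / \<bar>u\<bar>" using cis_sub_one[of "-(u*t)"] by (simp add: divide_right_mono)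
  finally show ?thesis using False by (simp add: abs_mult)
qed (simp add: FT_def)

lemma FT_diff: "FT (t+h) u - FT t u = (if u = 0 then complex_of_real h else cis (-(u*t)) * (1 - cis (-(u*h))) / (\<i> * complex_of_real u))"
proof (cases "u = 0")
  case False
  have "cis (-(u*(t+h))) = cis (-(u*t)) * cis (-(u*h))" by (simp add: cis_mult algebra_simps)
  then show ?thesis using False by (simp add: FT_def field_simps)
qed (simp add: FT_def)

lemma FT_quot_bound: "cmod ((FT (t+h) u - FT t u) / complex_of_real h) \<le> 1"
proof (cases "u = 0 \<or> h = 0")
  case True then show ?thesis by (auto simp: FT_diff)
next
  case False
  have "cmod (FT (t+h) u - FT t u) = cmod (1 - cis (-(u*h))) / \<bar>u\<bar>"
    using False by (simp add: FT_diff norm_divide norm_mult)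
  also have "\<dots> \<le> \<bar>u*h\<bar> / \<bar>u\<bar>" using cis_sub_one[of "-(u*h)"] by (simp add: divide_right_mono)
  finally show ?thesis using False by (simp add: abs_mult norm_divide divide_le_eq)
qed

lemma of_real_at0: "filterlim complex_of_real (at 0) (at (0::real))"
  unfolding filterlim_at by (auto intro!: tendsto_eq_intros simp: eventually_at_filter)

lemma FT_quot_lim: "((\<lambda>h. (FT (t+h) u - FT t u) / complex_of_real h) \<longlongrightarrow> cis (-(u*t))) (at 0)"
proof (cases "u = 0")
  case True
  have e: "eventually (\<lambda>h. (FT (t+h) u - FT t u) / complex_of_real h = 1) (at 0)"
    using True by (auto simp: FT_diff eventually_at_filter)
  show ?thesis by (subst tendsto_cong[OF e]) (simp add: True)
next
  case False
  define G where "G z = (1 - exp (- \<i> * complex_of_real u * z)) / (\<i> * complex_of_real u)" for z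
  have "DERIV G (complex_of_real t) :> (exp (- \<i> * complex_of_real u * complex_of_real t) * (- \<i> * complex_of_real u)) / (- (\<i> * complex_of_real u))"
    unfolding G_def[abs_def] using False by (auto intro!: derivative_eq_intros)
  hence "DERIV G (complex_of_real t) :> cis (-(u*t))" using False by (simp add: cis_conv_exp mult.assoc)
  hence l: "((\<lambda>k. (G (complex_of_real t + k) - G (complex_of_real t)) / k) \<longlongrightarrow> cis (-(u*t))) (at 0)"
    by (simp add: DERIV_def)
  have "((\<lambda>h. (G (complex_of_real t + complex_of_real h) - G (complex_of_real t)) / complex_of_real h) \<longlongrightarrow> cis (-(u*t))) (at 0)"
    using filterlim_compose[OF l of_real_at0] by (simp add: o_def)
  moreover have "G (complex_of_real t + complex_of_real h) - G (complex_of_real t) = FT (t+h) u - FT t u" for h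
    using False unfolding G_def FT_def by (simp add: cis_conv_exp algebra_simps)
  ultimately show ?thesis by simp
qed

lemma cis_meas: "(\<lambda>u. cis (-(u*t))) \<in> borel_measurable borel"
  unfolding mult.commute[of _ t] by (rule borel_measurable_continuous_onI[OF cis_cont])

lemma FT_meas: "(\<lambda>u. FT t u) \<in> borel_measurable borel"
proof -
  have 1: "(\<lambda>x. cis (-(x*t))) \<in> borel_measurable borel" using cis_meas .
  have 2: "(\<lambda>x. \<i> * complex_of_real x) \<in> borel_measurable borel"
    by (intro borel_measurable_continuous_onI continuous_intros)
  have "{u \<in> space borel. u = (0::real)} = {0}" by auto
  hence 3: "{u \<in> space borel. u = (0::real)} \<in> sets borel" by (simp add: borel_closed)
  show ?thesis unfolding FT_def using 1 2 3 by measurable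
qed

lemma FT_quot_meas: "(\<lambda>u. (FT (t+h) u - FT t u) / complex_of_real h) \<in> borel_measurable borel"
  using FT_meas by measurable

definition PHI :: "(real \<Rightarrow> real) \<Rightarrow> nat \<Rightarrow> real \<Rightarrow> complex" where
  "PHI m k u = complex_of_real (sqrt (m u)) * cnj (hF k u)"

definition MAJ :: "(real \<Rightarrow> real) \<Rightarrow> nat \<Rightarrow> real \<Rightarrow> real" where
  "MAJ m k u = (m u / (1 + u^2) + 2 * pi * ((1 + u^2) * (hermite_fun k u)^2)) / 2"

lemma amgm_aux:
  fixes a y s :: real assumes "a \<ge> 0" "s > 0"
  shows "sqrt a * y \<le> (a / s + s * y^2) / 2"
proof -
  have "0 \<le> (sqrt a - s*y)^2 / s" using assms by simp
  also have "(sqrt a - s*y)^2 / s = a / s - 2 * (sqrt a * y) + s * y^2"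
    using assms by (simp add: power2_eq_square field_simps)
  finally show ?thesis by simp
qed

lemma cmod_hF: "cmod (hF k u) = sqrt (2*pi) * \<bar>hermite_fun k u\<bar>"
  by (simp add: hF_eq norm_mult norm_power)

lemma PHI_bound: assumes "m u \<ge> 0" shows "cmod (PHI m k u) \<le> MAJ m k u"
proof -
  have "cmod (PHI m k u) = sqrt (m u) * (sqrt (2*pi) * \<bar>hermite_fun k u\<bar>)"
    unfolding PHI_def using assms by (simp add: norm_mult cmod_hF)
  also have "\<dots> \<le> (m u / (1+u^2) + (1+u^2) * (sqrt (2*pi) * \<bar>hermite_fun k u\<bar>)^2) / 2"
    by (rule amgm_aux[OF assms]) (use zero_le_power2[of u] in linarith)
  also have "\<dots> = MAJ m k u" unfolding MAJ_def by (simp add: power_mult_distrib)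
  finally show ?thesis .
qed

lemma hF_cont: "continuous_on UNIV (\<lambda>u. hF k u)"
proof -
  have "continuous_on UNIV (\<lambda>u. complex_of_real (sqrt (2*pi)) * (- \<i>)^k * complex_of_real (hermite_fun k u))"
    using gdom_hf[of k] unfolding gdom_def by (auto intro!: continuous_intros)
  then show ?thesis by (simp add: hF_eq)
qed

lemma hF_meas: "(\<lambda>u. cnj (hF k u)) \<in> borel_measurable borel"
  by (intro borel_measurable_continuous_onI continuous_intros hF_cont)

context
  fixes m :: "real \<Rightarrow> real"
  assumes meas: "m \<in> borel_measurable lborel" and pos: "\<And>u. 0 < m u"
    and int: "integrable lborel (\<lambda>u. m u / (1 + u^2))"
begin

lemma MAJ_integrable: "integrable lborel (MAJ m k)"
  unfolding MAJ_def[abs_def] using int hf_x2_integrable[of k] by auto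

lemma MAJ_integral: "(LINT u|lborel. MAJ m k u) \<le> ((LINT u|lborel. m u / (1 + u^2)) + 2 * pi * (2 * real k + 2)) / 2"
proof -
  have "(LINT u|lborel. MAJ m k u) = ((LINT u|lborel. m u / (1 + u^2)) + 2 * pi * (LINT u|lborel. (1 + u^2) * (hermite_fun k u)^2)) / 2"
    unfolding MAJ_def using int hf_x2_integrable[of k] by simp
  also have "\<dots> \<le> ((LINT u|lborel. m u / (1 + u^2)) + 2 * pi * (2 * real k + 2)) / 2"
    using hf_x2[of k] by (simp add: divide_right_mono)
  finally show ?thesis .
qed

lemma PHI_meas: "PHI m k \<in> borel_measurable lborel"
proof -
  have "(\<lambda>u. sqrt (m u)) \<in> borel_measurable lborel" using meas by measurable
  then show ?thesis unfolding PHI_def[abs_def] using hF_meas[of k] by measurable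
qed

lemma PHI_integrable: "integrable lborel (PHI m k)"
proof (rule Bochner_Integration.integrable_bound[OF MAJ_integrable PHI_meas], intro AE_I2)
  fix x
  have "cmod (PHI m k x) \<le> MAJ m k x" by (rule PHI_bound) (rule less_imp_le[OF pos])
  then show "norm (PHI m k x) \<le> norm (MAJ m k x)" by simp
qed

lemma PHI_bdd_integrable:
  assumes "g \<in> borel_measurable borel" "\<And>u. cmod (g u) \<le> B"
  shows "integrable lborel (\<lambda>u. PHI m k u * g u)"
proof (rule Bochner_Integration.integrable_bound)
  show "integrable lborel (\<lambda>u. B * MAJ m k u)" using MAJ_integrable by auto
  show "(\<lambda>u. PHI m k u * g u) \<in> borel_measurable lborel" using PHI_meas assms(1) by measurable
  show "AE x in lborel. norm (PHI m k x * g x) \<le> norm (B * MAJ m k x)"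
  proof (intro AE_I2)
    fix x
    have B: "B \<ge> 0" using assms(2)[of x] norm_ge_zero[of "g x"] by linarith
    have "norm (PHI m k x * g x) \<le> MAJ m k x * B"
      unfolding norm_mult by (intro mult_mono PHI_bound assms(2)) (auto intro: less_imp_le[OF pos] order_trans[OF _ PHI_bound])
    also have "\<dots> \<le> norm (B * MAJ m k x)" by (simp add: mult.commute)
    finally show "norm (PHI m k x * g x) \<le> norm (B * MAJ m k x)" .
  qed
qed

lemma PHI_bdd_integral:
  assumes "g \<in> borel_measurable borel" "\<And>u. cmod (g u) \<le> B"
  shows "cmod (LINT u|lborel. PHI m k u * g u) \<le> B * (((LINT u|lborel. m u / (1 + u^2)) + 2 * pi * (2 * real k + 2)) / 2)"
proof -
  have B: "B \<ge> 0" using assms(2)[of 0] norm_ge_zero[of "g 0"] by linarith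
  have "cmod (LINT u|lborel. PHI m k u * g u) \<le> (LINT u|lborel. cmod (PHI m k u * g u))"
    by (rule integral_norm_bound)
  also have "\<dots> \<le> (LINT u|lborel. B * MAJ m k u)"
  proof (rule integral_mono)
    show "integrable lborel (\<lambda>u. cmod (PHI m k u * g u))" using PHI_bdd_integrable[OF assms] by simp
    show "integrable lborel (\<lambda>u. B * MAJ m k u)" using MAJ_integrable by auto
    fix u
    show "cmod (PHI m k u * g u) \<le> B * MAJ m k u"
      unfolding norm_mult by (subst mult.commute, intro mult_mono PHI_bound assms(2))
        (auto intro: less_imp_le[OF pos] order_trans[OF _ PHI_bound] B)
  qed
  also have "\<dots> = B * (LINT u|lborel. MAJ m k u)" by simp
  also have "\<dots> \<le> B * (((LINT u|lborel. m u / (1 + u^2)) + 2 * pi * (2 * real k + 2)) / 2)"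
    using B MAJ_integral by (intro mult_left_mono) auto
  finally show ?thesis .
qed

lemma Tm_alt: "Tm_coeff m (ind0 t) k = (1 / (2 * pi)) * (LINT u|lborel. PHI m k u * FT t u)"
  unfolding Tm_coeff_def PHI_def fourier_ind0 by (simp add: mult_ac)

end

definition BND :: "(real \<Rightarrow> real) \<Rightarrow> nat \<Rightarrow> real" where
  "BND m k = (1 / (2*pi)) * (((LINT u|lborel. m u / (1 + u^2)) + 2 * pi * (2 * real k + 2)) / 2)"

definition wco :: "(real \<Rightarrow> real) \<Rightarrow> real \<Rightarrow> nat \<Rightarrow> complex" where
  "wco m t k = (1 / (2 * pi)) * (LINT u|lborel. PHI m k u * cis (-(u*t)))"

definition QT :: "real \<Rightarrow> real \<Rightarrow> real \<Rightarrow> complex" where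
  "QT t h u = (FT (t+h) u - FT t u) / complex_of_real h"

lemma QT_meas: "QT t h \<in> borel_measurable borel"
  unfolding QT_def[abs_def] by (rule FT_quot_meas)

lemma QT_bound: "cmod (QT t h u) \<le> 1"
  unfolding QT_def by (rule FT_quot_bound)

context
  fixes m :: "real \<Rightarrow> real"
  assumes meas: "m \<in> borel_measurable lborel" and pos: "\<And>u. 0 < m u"
    and int: "integrable lborel (\<lambda>u. m u / (1 + u^2))"
begin

lemma quot_eq: "(Tm_coeff m (ind0 (t+h)) k - Tm_coeff m (ind0 t) k) / complex_of_real h
   = (1 / (2 * pi)) * (LINT u|lborel. PHI m k u * QT t h u)"
proof -
  have i1: "integrable lborel (\<lambda>u. PHI m k u * FT s u)" for s
    by (rule PHI_bdd_integrable[OF meas pos int FT_meas FT_bound])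
  have "(LINT u|lborel. PHI m k u * QT t h u) = (LINT u|lborel. (PHI m k u * FT (t+h) u - PHI m k u * FT t u) / complex_of_real h)"
    unfolding QT_def by (rule Bochner_Integration.integral_cong) (auto simp: algebra_simps diff_divide_distrib)
  also have "\<dots> = ((LINT u|lborel. PHI m k u * FT (t+h) u) - (LINT u|lborel. PHI m k u * FT t u)) / complex_of_real h"
    using i1 by (simp add: Bochner_Integration.integral_diff)
  finally have e: "(LINT u|lborel. PHI m k u * QT t h u) = ((LINT u|lborel. PHI m k u * FT (t+h) u) - (LINT u|lborel. PHI m k u * FT t u)) / complex_of_real h" .
  show ?thesis unfolding Tm_alt[OF meas pos int] e
    by (simp only: right_diff_distrib[symmetric] times_divide_eq_right)
qed

lemma BND_nonneg: "BND m k \<ge> 0"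
proof -
  have "(LINT u|lborel. m u / (1 + u^2)) \<ge> 0"
    by (rule integral_nonneg_AE) (auto intro!: AE_I2 divide_nonneg_pos less_imp_le[OF pos] add_pos_nonneg)
  then show ?thesis unfolding BND_def by simp
qed

lemma X_nonneg: "((LINT u|lborel. m u / (1 + u^2)) + 2 * pi * (2 * real k + 2)) / 2 \<ge> 0"
proof -
  have "(LINT u|lborel. m u / (1 + u^2)) \<ge> 0"
    by (rule integral_nonneg_AE) (auto intro!: AE_I2 divide_nonneg_pos less_imp_le[OF pos] add_pos_nonneg)
  then show ?thesis by simp
qed

lemma quot_bound: "cmod ((Tm_coeff m (ind0 (t+h)) k - Tm_coeff m (ind0 t) k) / complex_of_real h) \<le> BND m k"
  unfolding quot_eq BND_def norm_mult
proof (rule mult_mono)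
  show "cmod (CLBINT u. PHI m k u * QT t h u) \<le> ((LINT u|lborel. m u / (1 + u^2)) + 2 * pi * (2 * real k + 2)) / 2"
    using PHI_bdd_integral[OF meas pos int QT_meas[of t h] QT_bound] by simp
qed (auto simp: norm_divide X_nonneg)

lemma w_bound: "cmod (wco m t k) \<le> BND m k"
  unfolding wco_def BND_def norm_mult
proof (rule mult_mono)
  have b: "\<And>u. cmod (cis (-(u*t))) \<le> 1" by simp
  show "cmod (CLBINT u. PHI m k u * cis (-(u*t))) \<le> ((LINT u|lborel. m u / (1 + u^2)) + 2 * pi * (2 * real k + 2)) / 2"
    using PHI_bdd_integral[OF meas pos int cis_meas b] by simp
qed (auto simp: norm_divide X_nonneg)

lemma quot_lim: "((\<lambda>h. (Tm_coeff m (ind0 (t+h)) k - Tm_coeff m (ind0 t) k) / complex_of_real h) \<longlongrightarrow> wco m t k) (at 0)"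
proof -
  have "((\<lambda>h. LINT u|lborel. PHI m k u * QT t h u) \<longlongrightarrow> (LINT u|lborel. PHI m k u * cis (-(u*t)))) (at 0)"
    unfolding tendsto_at_iff_sequentially
  proof (intro allI impI)
    fix X :: "nat \<Rightarrow> real" assume X: "\<forall>i. X i \<in> UNIV - {0}" "X \<longlonglongrightarrow> 0"
    have fX: "filterlim X (at 0) sequentially"
      using X by (auto simp: filterlim_at eventually_sequentially)
    show "((\<lambda>h. LINT u|lborel. PHI m k u * QT t h u) \<circ> X) \<longlonglongrightarrow> (LINT u|lborel. PHI m k u * cis (-(u*t)))"
      unfolding o_def
    proof (rule integral_dominated_convergence[where w="MAJ m k"])
      show "(\<lambda>u. PHI m k u * cis (-(u*t))) \<in> borel_measurable lborel"
        using PHI_meas[OF meas pos int] cis_meas by measurable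
      show "(\<lambda>u. PHI m k u * QT t (X i) u) \<in> borel_measurable lborel" for i
        using PHI_meas[OF meas pos int] QT_meas by measurable
      show "integrable lborel (MAJ m k)" by (rule MAJ_integrable[OF meas pos int])
      show "AE u in lborel. (\<lambda>i. PHI m k u * QT t (X i) u) \<longlonglongrightarrow> PHI m k u * cis (-(u*t))"
      proof (intro AE_I2 tendsto_mult tendsto_const)
        fix u
        show "(\<lambda>i. QT t (X i) u) \<longlonglongrightarrow> cis (-(u*t))"
          unfolding QT_def using filterlim_compose[OF FT_quot_lim fX] by (simp add: o_def)
      qed
      show "AE u in lborel. norm (PHI m k u * QT t (X i) u) \<le> MAJ m k u" for i
      proof (intro AE_I2)
        fix u
        have "norm (PHI m k u * QT t (X i) u) \<le> MAJ m k u * 1"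
          unfolding norm_mult
          by (intro mult_mono PHI_bound QT_bound) (auto intro: less_imp_le[OF pos] order_trans[OF _ PHI_bound])
        then show "norm (PHI m k u * QT t (X i) u) \<le> MAJ m k u" by simp
      qed
    qed
  qed
  then show ?thesis unfolding quot_eq wco_def by (intro tendsto_mult tendsto_const)
qed

end

lemma fw_Cons: "fock_weight p (k#ks) = 2 powr (real_of_int p * real (Suc k)) * fock_weight p ks"
  unfolding fock_weight_def by (simp add: powr_add[symmetric] algebra_simps)

lemma fw_pos: "fock_weight p ks > 0" unfolding fock_weight_def by simp

lemma fw_m1_le: "fock_weight (-1) ks \<le> fock_weight 1 ks"
  unfolding fock_weight_def by (intro powr_mono) auto

lemma fw_1_ge: "fock_weight 1 ks \<ge> 1"
  unfolding fock_weight_def by (simp add: ge_one_powr_ge_zero)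

lemma pw_1: "2 powr (real_of_int 1 * real (Suc k)) = (2::real)^(Suc k)"
proof -
  have "2 powr real (Suc k) = (2::real)^(Suc k)" by (rule powr_realpow) simp
  thus ?thesis by simp
qed

lemma pw_m1: "2 powr (real_of_int (-1) * real (Suc k)) = (1/2::real)^(Suc k)"
proof -
  have "2 powr real (Suc k) = (2::real)^(Suc k)" by (rule powr_realpow) simp
  moreover have "2 powr (real_of_int (-1) * real (Suc k)) = 1 / 2 powr real (Suc k)"
  proof -
    have e: "real_of_int (-1) * real (Suc k) = - real (Suc k)" by simp
    show ?thesis by (simp only: e powr_minus_divide)
  qed
  ultimately show ?thesis by (simp add: power_one_over)
qed

definition NF :: "int \<Rightarrow> fock \<Rightarrow> real" where
  "NF p F = (\<Sum>\<^sub>\<infinity>ks. (cmod (F ks))^2 * fock_weight p ks)"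

lemma NF_nonneg: "NF p F \<ge> 0"
  unfolding NF_def by (intro infsum_nonneg) (simp add: fw_pos less_imp_le)

lemma fin_le_NF: "fock_in p F \<Longrightarrow> finite A \<Longrightarrow> (\<Sum>ks\<in>A. (cmod (F ks))^2 * fock_weight p ks) \<le> NF p F"
  unfolding NF_def fock_in_def by (rule finite_sum_le_infsum) (auto simp: fw_pos less_imp_le)

lemma slice_summable1:
  assumes "fock_in 1 F"
  shows "summable (\<lambda>k. (cmod (F (k#ks)))^2 * fock_weight 1 (k#ks))"
proof -
  have inj: "inj_on (\<lambda>k. k#ks) UNIV" by (auto intro: inj_onI)
  have "(\<lambda>ks. (cmod (F ks))^2 * fock_weight 1 ks) summable_on ((\<lambda>k. k#ks) ` UNIV)"
    using assms unfolding fock_in_def by (rule summable_on_subset_banach) auto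
  hence "(\<lambda>k. (cmod (F (k#ks)))^2 * fock_weight 1 (k#ks)) summable_on UNIV"
    using summable_on_reindex[OF inj, of "\<lambda>ks. (cmod (F ks))^2 * fock_weight 1 ks"] by (simp add: o_def)
  then show ?thesis by (subst (asm) summable_on_UNIV_nonneg_real_iff) (auto simp: fw_pos less_imp_le)
qed

lemma slice_summable:
  assumes "fock_in 1 F"
  shows "summable (\<lambda>k. (cmod (F (k#ks)))^2 * 2^(Suc k))"
proof (rule summable_comparison_test[OF _ slice_summable1[OF assms, of ks]], intro exI allI impI)
  fix k :: nat
  have "(2::real)^(Suc k) \<le> 2^(Suc k) * fock_weight 1 ks" using fw_1_ge[of ks] by simp
  also have "\<dots> = fock_weight 1 (k#ks)" by (simp only: fw_Cons pw_1)
  finally have "(2::real)^(Suc k) \<le> fock_weight 1 (k#ks)" .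
  then show "norm ((cmod (F (k#ks)))^2 * 2^(Suc k)) \<le> (cmod (F (k#ks)))^2 * fock_weight 1 (k#ks)"
    by (simp add: mult_left_mono)
qed

lemma double_fin_le:
  assumes "fock_in 1 F" "finite A"
  shows "(\<Sum>ks\<in>A. \<Sum>k<n. (cmod (F (k#ks)))^2 * fock_weight 1 (k#ks)) \<le> NF 1 F"
proof -
  have inj: "inj_on (\<lambda>(k,ks). k#ks) ({..<n} \<times> A)" by (auto intro: inj_onI)
  have "(\<Sum>ks\<in>A. \<Sum>k<n. (cmod (F (k#ks)))^2 * fock_weight 1 (k#ks))
      = (\<Sum>(k,ks)\<in>{..<n} \<times> A. (cmod (F (k#ks)))^2 * fock_weight 1 (k#ks))"
    by (subst sum.swap) (simp add: sum.cartesian_product)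
  also have "\<dots> = (\<Sum>ks'\<in>(\<lambda>(k,ks). k#ks) ` ({..<n} \<times> A). (cmod (F ks'))^2 * fock_weight 1 ks')"
    by (subst sum.reindex[OF inj]) (simp add: case_prod_beta o_def)
  also have "\<dots> \<le> NF 1 F" by (rule fin_le_NF[OF assms(1)]) (use assms(2) in auto)
  finally show ?thesis .
qed

lemma Z_summable_le:
  assumes "fock_in 1 F" "finite A"
  shows "(\<Sum>ks\<in>A. \<Sum>k. (cmod (F (k#ks)))^2 * fock_weight 1 (k#ks)) \<le> NF 1 F"
proof -
  have "(\<Sum>ks\<in>A. \<Sum>k. (cmod (F (k#ks)))^2 * fock_weight 1 (k#ks)) = (\<Sum>k. \<Sum>ks\<in>A. (cmod (F (k#ks)))^2 * fock_weight 1 (k#ks))"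
    by (rule suminf_sum[symmetric]) (rule slice_summable1[OF assms(1)])
  also have "\<dots> \<le> NF 1 F"
  proof (rule suminf_le_const)
    show "summable (\<lambda>k. \<Sum>ks\<in>A. (cmod (F (k#ks)))^2 * fock_weight 1 (k#ks))"
      by (rule summable_sum) (rule slice_summable1[OF assms(1)])
    fix n
    have "(\<Sum>k<n. \<Sum>ks\<in>A. (cmod (F (k#ks)))^2 * fock_weight 1 (k#ks)) = (\<Sum>ks\<in>A. \<Sum>k<n. (cmod (F (k#ks)))^2 * fock_weight 1 (k#ks))"
      by (rule sum.swap)
    also have "\<dots> \<le> NF 1 F" by (rule double_fin_le[OF assms])
    finally show "(\<Sum>k<n. \<Sum>ks\<in>A. (cmod (F (k#ks)))^2 * fock_weight 1 (k#ks)) \<le> NF 1 F" .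
  qed
  finally show ?thesis .
qed

definition ssum :: "(nat \<Rightarrow> complex) \<Rightarrow> bool" where
  "ssum a \<longleftrightarrow> summable (\<lambda>k. (cmod (a k))^2 * (1/2)^(Suc k))"

definition SS :: "(nat \<Rightarrow> complex) \<Rightarrow> real" where
  "SS a = (\<Sum>k. (cmod (a k))^2 * (1/2)^(Suc k))"

definition YY :: "fock \<Rightarrow> nat list \<Rightarrow> real" where
  "YY F ks = (\<Sum>k. (cmod (F (k#ks)))^2 * 2^(Suc k))"

lemma SS_nonneg: "ssum a \<Longrightarrow> SS a \<ge> 0" unfolding SS_def ssum_def by (intro suminf_nonneg) simp_all

lemma YY_nonneg: "fock_in 1 F \<Longrightarrow> YY F ks \<ge> 0"
  unfolding YY_def by (intro suminf_nonneg slice_summable) simp_all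

lemma cs_partial:
  assumes "ssum a" "fock_in 1 F"
  shows "(\<Sum>k<n. cmod (a k) * cmod (F (k#ks))) \<le> sqrt (SS a) * sqrt (YY F ks)"
proof -
  define f where "f k = cmod (a k) * sqrt ((1/2)^(Suc k))" for k
  define g where "g k = cmod (F (k#ks)) * sqrt (2^(Suc k))" for k
  have fg: "\<bar>f k\<bar> * \<bar>g k\<bar> = cmod (a k) * cmod (F (k#ks))" for k
  proof -
    have "sqrt ((1/2::real)^(Suc k)) * sqrt (2^(Suc k)) = 1"
      by (simp add: real_sqrt_mult[symmetric] power_mult_distrib[symmetric])
    then show ?thesis unfolding f_def g_def by (simp add: abs_mult algebra_simps)
  qed
  have "(\<Sum>k<n. cmod (a k) * cmod (F (k#ks))) = (\<Sum>k<n. \<bar>f k\<bar> * \<bar>g k\<bar>)" by (simp add: fg)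
  also have "\<dots> \<le> L2_set f {..<n} * L2_set g {..<n}" by (rule L2_set_mult_ineq)
  also have "\<dots> \<le> sqrt (SS a) * sqrt (YY F ks)"
  proof (intro mult_mono)
    have "(\<Sum>k<n. (f k)^2) = (\<Sum>k<n. (cmod (a k))^2 * (1/2)^(Suc k))"
      unfolding f_def by (simp add: power_mult_distrib)
    also have "\<dots> \<le> SS a" unfolding SS_def using assms(1) unfolding ssum_def
      by (intro sum_le_suminf) auto
    finally show "L2_set f {..<n} \<le> sqrt (SS a)" unfolding L2_set_def by simp
    have "(\<Sum>k<n. (g k)^2) = (\<Sum>k<n. (cmod (F (k#ks)))^2 * 2^(Suc k))"
      unfolding g_def by (simp add: power_mult_distrib)
    also have "\<dots> \<le> YY F ks" unfolding YY_def using slice_summable[OF assms(2)]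
      by (intro sum_le_suminf) auto
    finally show "L2_set g {..<n} \<le> sqrt (YY F ks)" unfolding L2_set_def by simp
  qed (auto simp: L2_set_def SS_nonneg[OF assms(1)] intro: sum_nonneg)
  finally show ?thesis .
qed

lemma ann_abs_summable:
  assumes "ssum a" "fock_in 1 F"
  shows "summable (\<lambda>k. cmod (cnj (a k) * F (k#ks)))"
  by (rule summableI_nonneg_bounded[where x="sqrt (SS a) * sqrt (YY F ks)"])
     (use cs_partial[OF assms] in \<open>auto simp: norm_mult\<close>)

lemma ann_summable: "ssum a \<Longrightarrow> fock_in 1 F \<Longrightarrow> summable (\<lambda>k. cnj (a k) * F (k#ks))"
  by (rule summable_norm_cancel[OF ann_abs_summable])

lemma ann_bound:
  assumes "ssum a" "fock_in 1 F"
  shows "(cmod (annihilation a F ks))^2 \<le> SS a * YY F ks"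
proof -
  have "cmod (annihilation a F ks) \<le> (\<Sum>k. cmod (cnj (a k) * F (k#ks)))"
    unfolding annihilation_def by (rule summable_norm[OF ann_abs_summable[OF assms]])
  also have "\<dots> \<le> sqrt (SS a) * sqrt (YY F ks)"
    by (rule suminf_le_const[OF ann_abs_summable[OF assms]]) (use cs_partial[OF assms] in \<open>auto simp: norm_mult\<close>)
  finally have "cmod (annihilation a F ks) \<le> sqrt (SS a) * sqrt (YY F ks)" .
  hence "(cmod (annihilation a F ks))^2 \<le> (sqrt (SS a) * sqrt (YY F ks))^2"
    by (intro power_mono) auto
  also have "\<dots> = SS a * YY F ks" using SS_nonneg[OF assms(1)] YY_nonneg[OF assms(2)] by (simp add: power_mult_distrib)
  finally show ?thesis .
qed

definition OPA :: "(nat \<Rightarrow> complex) \<Rightarrow> fock \<Rightarrow> fock" where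
  "OPA a F = (\<lambda>ks. creation a F ks + annihilation a F ks)"

lemma sq_add_le: "(cmod (x + y))^2 \<le> 2 * (cmod x)^2 + 2 * (cmod y)^2"
proof -
  have "(cmod (x + y))^2 \<le> (cmod x + cmod y)^2" by (intro power_mono norm_triangle_ineq) simp
  also have "\<dots> \<le> 2 * (cmod x)^2 + 2 * (cmod y)^2"
    using sq_avg[of "cmod x" "cmod y"] by (simp add: power_divide)
  finally show ?thesis .
qed

lemma cre_part:
  assumes "ssum a" "fock_in 1 F" "finite A"
  shows "(\<Sum>ks\<in>A. (cmod (creation a F ks))^2 * fock_weight (-1) ks) \<le> SS a * NF 1 F"
proof -
  let ?x = "\<lambda>k. (cmod (a k))^2 * (1/2)^(Suc k)"
  let ?y = "\<lambda>r. (cmod (F r))^2 * fock_weight 1 r"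
  define A' where "A' = A - {[]}"
  have fA': "finite A'" using assms(3) unfolding A'_def by simp
  have "(\<Sum>ks\<in>A. (cmod (creation a F ks))^2 * fock_weight (-1) ks) = (\<Sum>ks\<in>A'. (cmod (creation a F ks))^2 * fock_weight (-1) ks)"
    unfolding A'_def using assms(3) by (intro sum.mono_neutral_right) (auto simp: creation_def)
  also have "\<dots> \<le> (\<Sum>ks\<in>A'. ?x (hd ks) * ?y (tl ks))"
  proof (intro sum_mono)
    fix ks assume "ks \<in> A'"
    then obtain k r where ks: "ks = k # r" unfolding A'_def by (cases ks) auto
    have w: "fock_weight (-1) (k#r) = (1/2)^(Suc k) * fock_weight (-1) r" by (simp only: fw_Cons pw_m1)
    have "(cmod (creation a F ks))^2 * fock_weight (-1) ks = ?x k * ((cmod (F r))^2 * fock_weight (-1) r)"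
      unfolding ks creation_def w by (simp add: norm_mult power_mult_distrib del: power_Suc)
    also have "\<dots> \<le> ?x k * ?y r" by (intro mult_left_mono mult_left_mono fw_m1_le) auto
    finally show "(cmod (creation a F ks))^2 * fock_weight (-1) ks \<le> ?x (hd ks) * ?y (tl ks)" by (simp add: ks)
  qed
  also have "\<dots> = (\<Sum>p\<in>(\<lambda>ks. (hd ks, tl ks)) ` A'. ?x (fst p) * ?y (snd p))"
  proof (subst sum.reindex)
    show "inj_on (\<lambda>ks. (hd ks, tl ks)) A'" unfolding A'_def by (rule inj_onI) (auto simp: list.expand)
  qed (simp add: o_def)
  also have "\<dots> \<le> (\<Sum>p\<in>(hd ` A') \<times> (tl ` A'). ?x (fst p) * ?y (snd p))"
    by (intro sum_mono2) (auto simp: fA' fw_pos less_imp_le)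
  also have "\<dots> = (\<Sum>k\<in>hd ` A'. ?x k) * (\<Sum>r\<in>tl ` A'. ?y r)"
    by (simp add: sum_product sum.cartesian_product case_prod_beta)
  also have "\<dots> \<le> SS a * NF 1 F"
  proof (intro mult_mono)
    show "(\<Sum>k\<in>hd ` A'. ?x k) \<le> SS a" unfolding SS_def
      using assms(1) unfolding ssum_def by (intro sum_le_suminf) (auto simp: fA')
    show "(\<Sum>r\<in>tl ` A'. ?y r) \<le> NF 1 F" by (rule fin_le_NF[OF assms(2)]) (simp add: fA')
  qed (auto simp: SS_nonneg[OF assms(1)] fw_pos less_imp_le intro!: sum_nonneg)
  finally show ?thesis .
qed

lemma ann_part:
  assumes "ssum a" "fock_in 1 F" "finite A"
  shows "(\<Sum>ks\<in>A. (cmod (annihilation a F ks))^2 * fock_weight (-1) ks) \<le> SS a * NF 1 F"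
proof -
  have "(\<Sum>ks\<in>A. (cmod (annihilation a F ks))^2 * fock_weight (-1) ks) \<le> (\<Sum>ks\<in>A. SS a * (YY F ks * fock_weight (-1) ks))"
    by (intro sum_mono) (use ann_bound[OF assms(1,2)] fw_pos in \<open>auto simp: mult.assoc intro: mult_right_mono less_imp_le\<close>)
  also have "\<dots> = SS a * (\<Sum>ks\<in>A. YY F ks * fock_weight (-1) ks)" by (simp add: sum_distrib_left)
  also have "\<dots> \<le> SS a * (\<Sum>ks\<in>A. \<Sum>k. (cmod (F (k#ks)))^2 * fock_weight 1 (k#ks))"
  proof (intro mult_left_mono sum_mono SS_nonneg[OF assms(1)])
    fix ks
    have "YY F ks * fock_weight (-1) ks = (\<Sum>k. (cmod (F (k#ks)))^2 * 2^(Suc k) * fock_weight (-1) ks)"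
      unfolding YY_def by (rule suminf_mult2[OF slice_summable[OF assms(2)]])
    also have "\<dots> \<le> (\<Sum>k. (cmod (F (k#ks)))^2 * fock_weight 1 (k#ks))"
    proof (rule suminf_le)
      show "summable (\<lambda>k. (cmod (F (k#ks)))^2 * 2^(Suc k) * fock_weight (-1) ks)"
        by (rule summable_mult2[OF slice_summable[OF assms(2)]])
      show "summable (\<lambda>k. (cmod (F (k#ks)))^2 * fock_weight 1 (k#ks))" by (rule slice_summable1[OF assms(2)])
      fix k
      have "(2::real)^(Suc k) * fock_weight (-1) ks \<le> 2^(Suc k) * fock_weight 1 ks"
        by (intro mult_left_mono fw_m1_le) simp
      also have "\<dots> = fock_weight 1 (k#ks)" by (simp only: fw_Cons pw_1)
      finally show "(cmod (F (k#ks)))^2 * 2^(Suc k) * fock_weight (-1) ks \<le> (cmod (F (k#ks)))^2 * fock_weight 1 (k#ks)"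
        by (simp add: mult.assoc mult_left_mono)
    qed
    finally show "YY F ks * fock_weight (-1) ks \<le> (\<Sum>k. (cmod (F (k#ks)))^2 * fock_weight 1 (k#ks))" .
  qed
  also have "\<dots> \<le> SS a * NF 1 F" by (intro mult_left_mono Z_summable_le assms SS_nonneg[OF assms(1)])
  finally show ?thesis .
qed

theorem OPA_main:
  assumes "ssum a" "fock_in 1 F"
  shows "fock_in (-1) (OPA a F)" "NF (-1) (OPA a F) \<le> 4 * SS a * NF 1 F"
proof -
  have fin: "(\<Sum>ks\<in>A. (cmod (OPA a F ks))^2 * fock_weight (-1) ks) \<le> 4 * SS a * NF 1 F" if "finite A" for A
  proof -
    have "(\<Sum>ks\<in>A. (cmod (OPA a F ks))^2 * fock_weight (-1) ks) \<le>
        (\<Sum>ks\<in>A. 2 * ((cmod (creation a F ks))^2 * fock_weight (-1) ks) + 2 * ((cmod (annihilation a F ks))^2 * fock_weight (-1) ks))"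
    proof (intro sum_mono)
      fix ks
      have "(cmod (OPA a F ks))^2 * fock_weight (-1) ks \<le> (2 * (cmod (creation a F ks))^2 + 2 * (cmod (annihilation a F ks))^2) * fock_weight (-1) ks"
        unfolding OPA_def by (intro mult_right_mono sq_add_le) (simp add: fw_pos less_imp_le)
      then show "(cmod (OPA a F ks))^2 * fock_weight (-1) ks \<le> 2 * ((cmod (creation a F ks))^2 * fock_weight (-1) ks) + 2 * ((cmod (annihilation a F ks))^2 * fock_weight (-1) ks)"
        by (simp add: algebra_simps)
    qed
    also have "\<dots> = 2 * (\<Sum>ks\<in>A. (cmod (creation a F ks))^2 * fock_weight (-1) ks) + 2 * (\<Sum>ks\<in>A. (cmod (annihilation a F ks))^2 * fock_weight (-1) ks)"
      by (simp add: sum.distrib sum_distrib_left)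
    also have "\<dots> \<le> 2 * (SS a * NF 1 F) + 2 * (SS a * NF 1 F)"
      using cre_part[OF assms that] ann_part[OF assms that] by linarith
    finally show ?thesis by simp
  qed
  have nn: "\<And>ks. 0 \<le> (cmod (OPA a F ks))^2 * fock_weight (-1) ks" by (simp add: fw_pos less_imp_le)
  have s: "(\<lambda>ks. (cmod (OPA a F ks))^2 * fock_weight (-1) ks) summable_on UNIV"
    by (rule nonneg_bdd_above_summable_on) (use nn fin in \<open>auto intro!: bdd_aboveI\<close>)
  then show "fock_in (-1) (OPA a F)" unfolding fock_in_def .
  show "NF (-1) (OPA a F) \<le> 4 * SS a * NF 1 F"
    unfolding NF_def[of "-1"] by (rule infsum_le_finite_sums[OF s]) (use fin in auto)
qed

lemma summable_poly2: "summable (\<lambda>k::nat. (real k + 1)^2 * (1/2)^(Suc k))"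
proof -
  have "summable (\<lambda>k::nat. (real k + 1)^2 * (1/2)^(k+1))"
    by (rule summable_comparison_test_bigo[where g="\<lambda>k. (3/4::real)^k"]) (simp add: summable_geometric, real_asymp)
  then show ?thesis by simp
qed

lemma ssum_bound:
  assumes "\<And>k. cmod (a k) \<le> C * (real k + 1)"
  shows "ssum a"
  unfolding ssum_def
proof (rule summable_comparison_test[OF _ summable_mult[OF summable_poly2, of "C^2"]], intro exI allI impI)
  fix k :: nat
  have "(cmod (a k))^2 \<le> (C * (real k + 1))^2" by (intro power_mono assms) simp
  then show "norm ((cmod (a k))^2 * (1/2)^(Suc k)) \<le> C^2 * ((real k + 1)^2 * (1/2)^(Suc k))"
    by (simp add: power_mult_distrib mult_right_mono del: power_Suc)
qed

lemma SS_tendsto0: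
  fixes d :: "real \<Rightarrow> nat \<Rightarrow> complex"
  assumes b: "\<And>h k. cmod (d h k) \<le> C * (real k + 1)"
    and l: "\<And>k. ((\<lambda>h. d h k) \<longlongrightarrow> 0) (at 0)"
  shows "((\<lambda>h. SS (d h)) \<longlongrightarrow> 0) (at 0)"
  unfolding tendsto_at_iff_sequentially
proof (intro allI impI)
  fix X :: "nat \<Rightarrow> real" assume X: "\<forall>i. X i \<in> UNIV - {0}" "X \<longlonglongrightarrow> 0"
  have fX: "filterlim X (at 0) sequentially"
    using X by (auto simp: filterlim_at eventually_sequentially)
  define ww where "ww = (\<lambda>k::nat. C^2 * ((real k + 1)^2 * (1/2::real)^(Suc k)))"
  define ss where "ss = (\<lambda>i k. (cmod (d (X i) k))^2 * (1/2::real)^(Suc k))"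
  have wi: "integrable (count_space UNIV) ww"
    unfolding integrable_count_space_nat_iff ww_def using summable_mult[OF summable_poly2, of "C^2"] by simp
  have bnd: "norm (ss i k) \<le> ww k" for i k
  proof -
    have "(cmod (d (X i) k))^2 \<le> (C * (real k + 1))^2" by (intro power_mono b) simp
    then show ?thesis unfolding ss_def ww_def by (simp add: power_mult_distrib mult_right_mono del: power_Suc)
  qed
  have lim: "(\<lambda>i. ss i k) \<longlonglongrightarrow> 0" for k
  proof -
    have "(\<lambda>i. d (X i) k) \<longlonglongrightarrow> 0" using filterlim_compose[OF l fX] by (simp add: o_def)
    then have "(\<lambda>i. (cmod (d (X i) k))^2 * (1/2)^(Suc k)) \<longlonglongrightarrow> (cmod 0)^2 * (1/2)^(Suc k)"
      by (intro tendsto_intros)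
    then show ?thesis unfolding ss_def by simp
  qed
  have "(\<lambda>i. integral\<^sup>L (count_space UNIV) (ss i)) \<longlonglongrightarrow> integral\<^sup>L (count_space UNIV) (\<lambda>k::nat. 0::real)"
    by (rule integral_dominated_convergence[where w="ww"]) (use wi bnd lim in auto)
  moreover have "integral\<^sup>L (count_space UNIV) (ss i) = SS (d (X i))" for i
  proof -
    have "integrable (count_space UNIV) (ss i)"
      by (rule integrable_dominated_convergence2[where w="ww" and f="\<lambda>k. 0::real"]) (use wi bnd lim in auto)
    then show ?thesis unfolding SS_def ss_def by (rule integral_count_space_nat)
  qed
  ultimately show "((\<lambda>h. SS (d h)) \<circ> X) \<longlonglongrightarrow> 0" by (simp add: o_def)
qed

lemma creation_diff: "creation (\<lambda>k. a k - b k) F ks = creation a F ks - creation b F ks"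
  unfolding creation_def by (cases ks) (auto simp: algebra_simps)

lemma creation_div: "creation (\<lambda>k. a k / c) F ks = creation a F ks / c"
  unfolding creation_def by (cases ks) auto

lemma creation_add: "creation a (\<lambda>ks. F ks + H ks) ks = creation a F ks + creation a H ks"
  unfolding creation_def by (cases ks) (auto simp: algebra_simps)

lemma creation_mult: "creation a (\<lambda>ks. c * F ks) ks = c * creation a F ks"
  unfolding creation_def by (cases ks) (auto simp: algebra_simps)

lemma ann_diff: "ssum a \<Longrightarrow> ssum b \<Longrightarrow> fock_in 1 F \<Longrightarrow>
  annihilation (\<lambda>k. a k - b k) F ks = annihilation a F ks - annihilation b F ks"
  unfolding annihilation_def
  by (subst suminf_diff[OF ann_summable ann_summable]) (auto simp: algebra_simps)

lemma ann_div: "ssum a \<Longrightarrow> fock_in 1 F \<Longrightarrow>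
  annihilation (\<lambda>k. a k / complex_of_real c) F ks = annihilation a F ks / complex_of_real c"
  unfolding annihilation_def
  by (subst suminf_divide[OF ann_summable, symmetric]) auto

lemma ann_add: "ssum a \<Longrightarrow> fock_in 1 F \<Longrightarrow> fock_in 1 H \<Longrightarrow>
  annihilation a (\<lambda>ks. F ks + H ks) ks = annihilation a F ks + annihilation a H ks"
  unfolding annihilation_def
  by (subst suminf_add[OF ann_summable ann_summable]) (auto simp: algebra_simps)

lemma ann_mult: "ssum a \<Longrightarrow> fock_in 1 F \<Longrightarrow>
  annihilation a (\<lambda>ks. c * F ks) ks = c * annihilation a F ks"
  unfolding annihilation_def
  by (subst suminf_mult[OF ann_summable, symmetric]) (auto simp: algebra_simps)

lemma fock_norm_NF: "fock_norm p F = sqrt (NF p F)"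
  unfolding fock_norm_def NF_def ..

lemma G1_in1: "F \<in> G1 \<Longrightarrow> fock_in 1 F"
  unfolding G1_def by (metis (mono_tags) mem_Collect_eq of_nat_1)

lemma in_Gm1: "fock_in (-1) F \<Longrightarrow> F \<in> Gm1"
  unfolding Gm1_def by (metis (mono_tags) mem_Collect_eq of_nat_1)

lemma seminorm_bound:
  assumes "Gm1_seminorm q" "ssum a" "fock_in 1 F"
  obtains C where "C \<ge> 0" "0 \<le> q (OPA a F)" "q (OPA a F) \<le> C * sqrt (4 * SS a * NF 1 F)"
proof -
  obtain C where C: "\<And>x. fock_in (- int 1) x \<Longrightarrow> q x \<le> C * fock_norm (- int 1) x"
    using assms(1) unfolding Gm1_seminorm_def by blast
  have fi: "fock_in (-1) (OPA a F)" by (rule OPA_main(1)[OF assms(2,3)])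
  have fi': "fock_in (- int 1) (OPA a F)" using fi by simp
  have "q (OPA a F) \<le> C * sqrt (NF (-1) (OPA a F))" using C[OF fi'] by (simp add: fock_norm_NF)
  also have "\<dots> \<le> max C 0 * sqrt (NF (-1) (OPA a F))" by (intro mult_right_mono) (auto simp: NF_nonneg)
  also have "\<dots> \<le> max C 0 * sqrt (4 * SS a * NF 1 F)"
    by (intro mult_left_mono real_sqrt_le_mono OPA_main(2)[OF assms(2,3)]) auto
  finally have "q (OPA a F) \<le> max C 0 * sqrt (4 * SS a * NF 1 F)" .
  moreover have "0 \<le> q (OPA a F)" using assms(1) in_Gm1[OF fi] unfolding Gm1_seminorm_def by blast
  ultimately show ?thesis using that[of "max C 0"] by auto
qed

lemma seminorm_C:
  assumes "Gm1_seminorm q"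
  shows "\<exists>C\<ge>0. \<forall>a F. ssum a \<longrightarrow> fock_in 1 F \<longrightarrow> 0 \<le> q (OPA a F) \<and> q (OPA a F) \<le> C * sqrt (4 * SS a * NF 1 F)"
proof -
  obtain C where C: "\<And>x. fock_in (- int 1) x \<Longrightarrow> q x \<le> C * fock_norm (- int 1) x"
    using assms(1) unfolding Gm1_seminorm_def by blast
  have "0 \<le> q (OPA a F) \<and> q (OPA a F) \<le> max C 0 * sqrt (4 * SS a * NF 1 F)" if "ssum a" "fock_in 1 F" for a F
  proof -
    have fi: "fock_in (-1) (OPA a F)" by (rule OPA_main(1)[OF that])
    have fi': "fock_in (- int 1) (OPA a F)" using fi by simp
    have "q (OPA a F) \<le> C * sqrt (NF (-1) (OPA a F))" using C[OF fi'] by (simp add: fock_norm_NF)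
    also have "\<dots> \<le> max C 0 * sqrt (NF (-1) (OPA a F))" by (intro mult_right_mono) (auto simp: NF_nonneg)
    also have "\<dots> \<le> max C 0 * sqrt (4 * SS a * NF 1 F)"
      by (intro mult_left_mono real_sqrt_le_mono OPA_main(2)[OF that]) auto
    finally have "q (OPA a F) \<le> max C 0 * sqrt (4 * SS a * NF 1 F)" .
    moreover have "0 \<le> q (OPA a F)" using assms(1) in_Gm1[OF fi] unfolding Gm1_seminorm_def by blast
    ultimately show ?thesis by blast
  qed
  then show ?thesis by (intro exI[of _ "max C 0"]) auto
qed

context
  fixes m :: "real \<Rightarrow> real"
  assumes meas: "m \<in> borel_measurable lborel" and pos: "\<And>u. 0 < m u"
    and int: "integrable lborel (\<lambda>u. m u / (1 + u^2))"
begin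

definition "Cb = (LINT u|lborel. m u / (1 + u^2)) / (4 * pi) + 1"

lemma Cb_nonneg: "Cb \<ge> 1"
proof -
  have "(LINT u|lborel. m u / (1 + u^2)) \<ge> 0"
    by (rule integral_nonneg_AE) (auto intro!: AE_I2 divide_nonneg_pos less_imp_le[OF pos] add_pos_nonneg)
  then show ?thesis unfolding Cb_def by simp
qed

lemma BND_le: "BND m k \<le> Cb * (real k + 1)"
proof -
  define J where "J = (LINT u|lborel. m u / (1 + u^2)) / (4 * pi)"
  have I: "(LINT u|lborel. m u / (1 + u^2)) \<ge> 0"
    by (rule integral_nonneg_AE) (auto intro!: AE_I2 divide_nonneg_pos less_imp_le[OF pos] add_pos_nonneg)
  hence J: "J \<ge> 0" unfolding J_def by simp
  have "BND m k = J + (real k + 1)"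
    unfolding BND_def J_def by (simp add: field_simps)
  also have "\<dots> \<le> J * (real k + 1) + (real k + 1)"
    using mult_left_mono[of 1 "real k + 1" J] J by simp
  also have "\<dots> = Cb * (real k + 1)" unfolding Cb_def J_def by (simp add: algebra_simps)
  finally show ?thesis .
qed

lemma Tm_bound: "cmod (Tm_coeff m (ind0 t) k) \<le> (\<bar>t\<bar> * Cb) * (real k + 1)"
proof -
  define XX where "XX = ((LINT u|lborel. m u / (1 + u^2)) + 2 * pi * (2 * real k + 2)) / 2"
  have L: "cmod (LINT u|lborel. PHI m k u * FT t u) \<le> \<bar>t\<bar> * XX"
    unfolding XX_def by (rule PHI_bdd_integral[OF meas pos int FT_meas FT_bound])
  have "cmod (Tm_coeff m (ind0 t) k) = cmod (LINT u|lborel. PHI m k u * FT t u) / (2 * pi)"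
    unfolding Tm_alt[OF meas pos int] norm_mult by (simp add: norm_divide)
  also have "\<dots> \<le> (\<bar>t\<bar> * XX) / (2 * pi)" by (rule divide_right_mono[OF L]) simp
  also have "\<dots> = \<bar>t\<bar> * BND m k" unfolding BND_def XX_def by simp
  also have "\<dots> \<le> \<bar>t\<bar> * (Cb * (real k + 1))" by (intro mult_left_mono BND_le) auto
  finally show ?thesis by (simp add: mult.assoc)
qed

lemma ssum_diff_bound:
  assumes "\<And>k. cmod (a k) \<le> A * (real k + 1)" "\<And>k. cmod (b k) \<le> B * (real k + 1)"
  shows "cmod (a k - b k) \<le> (A + B) * (real k + 1)"
  using norm_triangle_ineq4[of "a k" "b k"] assms[of k] by (simp add: algebra_simps)

end

theorem theorem8p2:
  fixes m :: "real \<Rightarrow> real" and b K C1 C2 :: real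
  assumes meas: "m \<in> borel_measurable lborel"
    and pos: "\<And>u. 0 < m u"
    and int: "integrable lborel (\<lambda>u. m u / (1 + u^2))"
    and b: "b < 2" and K: "K > 0" and C1: "C1 > 0" and C2: "C2 > 0"
    and small: "\<And>u. 0 < \<bar>u\<bar> \<Longrightarrow> \<bar>u\<bar> \<le> 1 \<Longrightarrow> m u \<le> K * \<bar>u\<bar> powr (- b)"
    and large: "\<And>u. 1 \<le> \<bar>u\<bar> \<Longrightarrow> m u \<le> C1 * exp (C2 * \<bar>u\<bar>)"
  shows "\<exists>W :: real \<Rightarrow> fock \<Rightarrow> fock.
           (\<forall>t. cont_lin_G (W t)) \<and>
           (\<forall>t. \<forall>f\<in>G1.
              Gm1_tendsto (\<lambda>h. (\<lambda>ks. (Xm m (t + h) f ks - Xm m t f ks) / complex_of_real h))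
                          (W t f) (at 0))"
proof -
  define W where "W t = OPA (wco m t)" for t
  have sw: "ssum (wco m t)" for t
    by (rule ssum_bound[where C="Cb m"]) (rule order_trans[OF w_bound[OF meas pos int] BND_le[OF meas pos int]])
  have gb: "cmod (Tm_coeff m (ind0 t) k) \<le> (\<bar>t\<bar> * Cb m) * (real k + 1)" for t k
    by (rule Tm_bound[OF meas pos int])
  have sgd: "ssum (\<lambda>k. Tm_coeff m (ind0 s) k - Tm_coeff m (ind0 t) k)" for s t
    by (rule ssum_bound) (rule ssum_diff_bound[OF meas pos int gb gb])
  have qb: "cmod ((Tm_coeff m (ind0 (t+h)) k - Tm_coeff m (ind0 t) k) / complex_of_real h) \<le> Cb m * (real k + 1)" for t h k
    by (rule order_trans[OF quot_bound[OF meas pos int] BND_le[OF meas pos int]])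
  have sq: "ssum (\<lambda>k. (Tm_coeff m (ind0 (t+h)) k - Tm_coeff m (ind0 t) k) / complex_of_real h)" for t h
    by (rule ssum_bound[OF qb])
  have wb: "cmod (wco m t k) \<le> Cb m * (real k + 1)" for t k
    by (rule order_trans[OF w_bound[OF meas pos int] BND_le[OF meas pos int]])
  have X_OPA: "Xm m t f = OPA (Tm_coeff m (ind0 t)) f" for t f unfolding Xm_def OPA_def ..
  show ?thesis
  proof (intro exI[of _ W] conjI allI ballI)
    fix t
    show "cont_lin_G (W t)"
      unfolding cont_lin_G_def W_def
    proof (intro conjI ballI allI impI)
      fix F assume F: "F \<in> G1"
      show "OPA (wco m t) F \<in> Gm1" by (rule in_Gm1[OF OPA_main(1)[OF sw G1_in1[OF F]]])
      fix c
      show "OPA (wco m t) (\<lambda>ks. c * F ks) = (\<lambda>ks. c * OPA (wco m t) F ks)"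
        unfolding OPA_def by (rule ext) (simp add: creation_mult ann_mult[OF sw G1_in1[OF F]] algebra_simps)
    next
      fix F H assume F: "F \<in> G1" and H: "H \<in> G1"
      show "OPA (wco m t) (\<lambda>ks. F ks + H ks) = (\<lambda>ks. OPA (wco m t) F ks + OPA (wco m t) H ks)"
        unfolding OPA_def by (rule ext) (simp add: creation_add ann_add[OF sw G1_in1[OF F] G1_in1[OF H]] algebra_simps)
    next
      fix q assume q: "Gm1_seminorm q"
      obtain C where C: "C \<ge> 0" "\<And>a F. ssum a \<Longrightarrow> fock_in 1 F \<Longrightarrow> 0 \<le> q (OPA a F) \<and> q (OPA a F) \<le> C * sqrt (4 * SS a * NF 1 F)"
        using seminorm_C[OF q] by blast
      have "q (OPA (wco m t) F) \<le> (C * sqrt (4 * SS (wco m t))) * fock_norm (int 1) F" if F: "F \<in> G1" for F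
      proof -
        have "q (OPA (wco m t) F) \<le> C * sqrt (4 * SS (wco m t) * NF 1 F)" using C(2)[OF sw G1_in1[OF F]] by blast
        also have "\<dots> = (C * sqrt (4 * SS (wco m t))) * fock_norm (int 1) F"
          by (simp add: fock_norm_NF real_sqrt_mult)
        finally show ?thesis .
      qed
      then show "\<exists>p::nat. \<exists>C. \<forall>F\<in>G1. q (OPA (wco m t) F) \<le> C * fock_norm (int p) F" by blast
    qed
  next
    fix t f assume f: "f \<in> G1"
    have f1: "fock_in 1 f" by (rule G1_in1[OF f])
    define d where "d h k = (Tm_coeff m (ind0 (t+h)) k - Tm_coeff m (ind0 t) k) / complex_of_real h - wco m t k" for h k
    have db: "cmod (d h k) \<le> (Cb m + Cb m) * (real k + 1)" for h k
      unfolding d_def by (rule ssum_diff_bound[OF meas pos int qb wb])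
    have sd: "ssum (d h)" for h by (rule ssum_bound[OF db])
    have Deq: "(\<lambda>ks. (Xm m (t + h) f ks - Xm m t f ks) / complex_of_real h)
        = OPA (\<lambda>k. (Tm_coeff m (ind0 (t+h)) k - Tm_coeff m (ind0 t) k) / complex_of_real h) f" for h
    proof (rule ext)
      fix ks
      let ?g1 = "Tm_coeff m (ind0 (t+h))" and ?g0 = "Tm_coeff m (ind0 t)"
      have c: "creation (\<lambda>k. (?g1 k - ?g0 k) / complex_of_real h) f ks = (creation ?g1 f ks - creation ?g0 f ks) / complex_of_real h"
        by (simp only: creation_div[of "\<lambda>k. ?g1 k - ?g0 k"] creation_diff)
      have a: "annihilation (\<lambda>k. (?g1 k - ?g0 k) / complex_of_real h) f ks = (annihilation ?g1 f ks - annihilation ?g0 f ks) / complex_of_real h"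
        by (simp only: ann_div[OF sgd f1] ann_diff[OF ssum_bound[OF gb] ssum_bound[OF gb] f1])
      show "(Xm m (t + h) f ks - Xm m t f ks) / complex_of_real h = OPA (\<lambda>k. (?g1 k - ?g0 k) / complex_of_real h) f ks"
        unfolding X_OPA OPA_def c a by (simp add: add_divide_distrib diff_divide_distrib)
    qed
    have DLeq: "(\<lambda>ks. (Xm m (t + h) f ks - Xm m t f ks) / complex_of_real h - W t f ks) = OPA (d h) f" for h
    proof (rule ext)
      fix ks
      let ?q = "\<lambda>k. (Tm_coeff m (ind0 (t+h)) k - Tm_coeff m (ind0 t) k) / complex_of_real h"
      have dfun: "d h = (\<lambda>k. ?q k - wco m t k)" by (rule ext) (simp only: d_def)
      have e1: "(Xm m (t + h) f ks - Xm m t f ks) / complex_of_real h = OPA ?q f ks"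
        using fun_cong[OF Deq[of h], of ks] by (simp only:)
      have c: "creation (d h) f ks = creation ?q f ks - creation (wco m t) f ks"
        unfolding dfun by (rule creation_diff)
      have a: "annihilation (d h) f ks = annihilation ?q f ks - annihilation (wco m t) f ks"
        unfolding dfun by (rule ann_diff[OF sq sw f1])
      show "(Xm m (t + h) f ks - Xm m t f ks) / complex_of_real h - W t f ks = OPA (d h) f ks"
        unfolding e1 W_def OPA_def c a by simp
    qed
    show "Gm1_tendsto (\<lambda>h. (\<lambda>ks. (Xm m (t + h) f ks - Xm m t f ks) / complex_of_real h)) (W t f) (at 0)"
      unfolding Gm1_tendsto_def
    proof (intro conjI allI impI)
      show "W t f \<in> Gm1" unfolding W_def by (rule in_Gm1[OF OPA_main(1)[OF sw f1]])
      show "\<forall>\<^sub>F h in at 0. (\<lambda>ks. (Xm m (t + h) f ks - Xm m t f ks) / complex_of_real h) \<in> Gm1"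
        unfolding Deq by (intro always_eventually allI in_Gm1[OF OPA_main(1)[OF sq f1]])
      fix q assume q: "Gm1_seminorm q"
      obtain C where C: "C \<ge> 0" "\<And>a F. ssum a \<Longrightarrow> fock_in 1 F \<Longrightarrow> 0 \<le> q (OPA a F) \<and> q (OPA a F) \<le> C * sqrt (4 * SS a * NF 1 F)"
        using seminorm_C[OF q] by blast
      have dl: "((\<lambda>h. d h k) \<longlongrightarrow> 0) (at 0)" for k
      proof -
        have "((\<lambda>h. (Tm_coeff m (ind0 (t+h)) k - Tm_coeff m (ind0 t) k) / complex_of_real h - wco m t k) \<longlongrightarrow> wco m t k - wco m t k) (at 0)"
          by (intro tendsto_diff quot_lim[OF meas pos int] tendsto_const)
        then show ?thesis unfolding d_def by simp
      qed
      have SS0: "((\<lambda>h. SS (d h)) \<longlongrightarrow> 0) (at 0)" by (rule SS_tendsto0[OF db dl])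
      have "((\<lambda>h. C * sqrt (4 * SS (d h) * NF 1 f)) \<longlongrightarrow> C * sqrt (4 * 0 * NF 1 f)) (at 0)"
        by (intro tendsto_intros SS0)
      hence lim0: "((\<lambda>h. C * sqrt (4 * SS (d h) * NF 1 f)) \<longlongrightarrow> 0) (at 0)" by simp
      have "((\<lambda>h. q (OPA (d h) f)) \<longlongrightarrow> 0) (at 0)"
      proof (rule Lim_null_comparison[OF _ lim0])
        show "\<forall>\<^sub>F h in at 0. norm (q (OPA (d h) f)) \<le> C * sqrt (4 * SS (d h) * NF 1 f)"
          using C(2)[OF sd f1] by (intro always_eventually allI) auto
      qed
      then show "((\<lambda>h. q (\<lambda>ks. (Xm m (t + h) f ks - Xm m t f ks) / complex_of_real h - W t f ks)) \<longlongrightarrow> 0) (at 0)"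
        unfolding DLeq .
    qed
  qed
qed

end
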